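(* Let $C$ be an $n\times n$ matrix of non-negative integers, and let $0\le m\le n$. Suppose: - all entries in the first $m$ rows of $C$ are non-zero; - all entries in the last $n-m$ rows of $C$ are zero; - the first column of $C$ is $(d,\dots,d,0,\dots,0)^T$, with $m$ entries equal to $d$, where $d$ is the gcd of the non-zero entries of $C$. If $C$ has rank $1$, then $J_{nm}+C\sim_M J_{nm}+D$, where $D$ is the $n\times n$ matrix whose first $m$ rows have all entries equal to $d$ and whose last $n-m$ rows are zero.
   Context: $J_{nm}$ ($0\le m\le n$) is the $n\times n$ matrix whose $i$-th row, for $i\le m$, has a $1$ in position $i$ and $0$ elsewhere, and whose last $n-m$ rows consist entirely of $\infty$. Arithmetic convention: $\infty+a=\infty$. For an $X\times X$ matrix $A$ with entries in $\{0,1,2,\dots\}\cup\{\infty\}$, $G_A$ is the graph with vertex set $X$ and exactly $A(x,y)$ edges from $x$ to $y$. For matrices, $A\sim_M B$ means $G_A\sim_M G_B$. A graph may have multiple edges and loops. A source receives no edges, a sink emits no edges, and an infinite emitter emits infinitely many edges. A vertex is singular if it is a sink or infinite emitter, and regular otherwise. Move-equivalence $\sim_M$ is the smallest equivalence relation on graphs with finitely many vertices such that $G\sim_M E$ whenever $E$ is isomorphic to a graph obtained from $G$ by one of the following moves. (S) Delete a regular source together with the edges it emits. (R) For a regular vertex $u$ emitting exactly one edge $f$, with $r(f)\neq u$, and all of whose incoming edges have the same source $v$: delete $u$, $f$ and the edges into $u$, and add for each $e\in r^{-1}(u)$ an edge $[ef]$ from $v$ to $r(f)$. (O) Out-splitting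 at a non-sink $v$ along a partition $\mathcal E_1,\dots,\mathcal E_n$ of $s^{-1}(v)$ with at most one infinite part. Replace $v$ by $v^1,\dots,v^n$. Each edge $e$ into $v$ becomes copies $e^1,\dots,e^n$ with $r(e^i)=v^i$ and source $s(e)$, or source $v^j$ if $s(e)=v$ and $e\in\mathcal E_j$. An edge from $v$ to $w\neq v$ lying in $\mathcal E_i$ gets source $v^i$. (I) In-splitting at a regular non-source $v$ along a partition $\mathcal E_1,\dots,\mathcal E_n$ of $r^{-1}(v)$. Replace $v$ by $v^1,\dots,v^n$. Each edge $e$ out of $v$ becomes copies $e^1,\dots,e^n$ with $s(e^i)=v^i$ and range $r(e)$, or range $v^j$ if $r(e)=v$ and $e\in\mathcal E_j$. An edge into $v$ from $w\neq v$ lying in $\mathcal E_i$ gets range $v^i$. *)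

theory Defs
  imports Main "HOL-Library.Extended_Nat" "Jordan_Normal_Form.DL_Rank"
begin

record ('v, 'e) graph =
  verts :: "'v set"
  edges :: "'e set"
  src :: "'e \<Rightarrow> 'v"
  rng :: "'e \<Rightarrow> 'v"

definition wf_graph :: "('v, 'e) graph \<Rightarrow> bool" where
  "wf_graph G \<longleftrightarrow> finite (verts G) \<and>
     (\<forall>e \<in> edges G. src G e \<in> verts G \<and> rng G e \<in> verts G)"

definition graph_iso :: "('v1, 'e1) graph \<Rightarrow> ('v2, 'e2) graph \<Rightarrow> bool" where
  "graph_iso G H \<longleftrightarrow> (\<exists>\<phi> \<psi>. bij_betw \<phi> (verts G) (verts H) \<and> bij_betw \<psi> (edges G) (edges H) \<and>
     (\<forall>e \<in> edges G. src H (\<psi> e) = \<phi> (src G e) \<and> rng H (\<psi> e) = \<phi> (rng G e)))"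

definition out_edges :: "('v, 'e) graph \<Rightarrow> 'v \<Rightarrow> 'e set" where
  "out_edges G v = {e \<in> edges G. src G e = v}"

definition in_edges :: "('v, 'e) graph \<Rightarrow> 'v \<Rightarrow> 'e set" where
  "in_edges G v = {e \<in> edges G. rng G e = v}"

definition is_source :: "('v, 'e) graph \<Rightarrow> 'v \<Rightarrow> bool" where
  "is_source G v \<longleftrightarrow> in_edges G v = {}"

definition is_sink :: "('v, 'e) graph \<Rightarrow> 'v \<Rightarrow> bool" where
  "is_sink G v \<longleftrightarrow> out_edges G v = {}"

definition is_inf_emitter :: "('v, 'e) graph \<Rightarrow> 'v \<Rightarrow> bool" where
  "is_inf_emitter G v \<longleftrightarrow> infinite (out_edges G v)"

definition is_regular :: "('v, 'e) graph \<Rightarrow> 'v \<Rightarrow> bool" where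
  "is_regular G v \<longleftrightarrow> v \<in> verts G \<and> \<not> is_sink G v \<and> \<not> is_inf_emitter G v"

definition move_S_cond :: "('v, 'e) graph \<Rightarrow> 'v \<Rightarrow> bool" where
  "move_S_cond G v \<longleftrightarrow> is_regular G v \<and> is_source G v"

definition move_S :: "('v, 'e) graph \<Rightarrow> 'v \<Rightarrow> ('v, 'e) graph" where
  "move_S G v = \<lparr>verts = verts G - {v}, edges = {e \<in> edges G. src G e \<noteq> v},
                 src = src G, rng = rng G\<rparr>"

text \<open>(R) reduction at u with unique out-edge f; Inl e = old edge, Inr e = new edge [ef]\<close>
definition move_R_cond :: "('v, 'e) graph \<Rightarrow> 'v \<Rightarrow> 'e \<Rightarrow> 'v \<Rightarrow> bool" where
  "move_R_cond G u f v \<longleftrightarrow> u \<in> verts G \<and> is_regular G u \<and> out_edges G u = {f} \<and>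
     rng G f \<noteq> u \<and> src G ` in_edges G u = {v}"

definition move_R :: "('v, 'e) graph \<Rightarrow> 'v \<Rightarrow> 'e \<Rightarrow> ('v, 'e + 'e) graph" where
  "move_R G u f = \<lparr>verts = verts G - {u},
     edges = Inl ` (edges G - in_edges G u - {f}) \<union> Inr ` in_edges G u,
     src = (\<lambda>x. case x of Inl e \<Rightarrow> src G e | Inr e \<Rightarrow> src G e),
     rng = (\<lambda>x. case x of Inl e \<Rightarrow> rng G e | Inr e \<Rightarrow> rng G f)\<rparr>"

text \<open>(O) out-splitting at v along the partition of out_edges G v into the
  nonempty classes {e. p e = i}, i < k; vertex (v,i) is v^(i+1), (w,0) is w \<noteq> v.\<close>
definition move_O_cond :: "('v, 'e) graph \<Rightarrow> 'v \<Rightarrow> nat \<Rightarrow> ('e \<Rightarrow> nat) \<Rightarrow> bool" where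
  "move_O_cond G v k p \<longleftrightarrow> v \<in> verts G \<and> \<not> is_sink G v \<and> 1 \<le> k \<and>
     p ` out_edges G v = {0..<k} \<and>
     (\<forall>i<k. \<forall>j<k. infinite {e \<in> out_edges G v. p e = i} \<and>
                  infinite {e \<in> out_edges G v. p e = j} \<longrightarrow> i = j)"

definition move_O :: "('v, 'e) graph \<Rightarrow> 'v \<Rightarrow> nat \<Rightarrow> ('e \<Rightarrow> nat) \<Rightarrow> ('v \<times> nat, 'e \<times> nat) graph" where
  "move_O G v k p = \<lparr>
     verts = {(w, 0) | w. w \<in> verts G \<and> w \<noteq> v} \<union> {(v, i) | i. i < k},
     edges = {(e, 0) | e. e \<in> edges G \<and> rng G e \<noteq> v} \<union>
             {(e, i) | e i. e \<in> edges G \<and> rng G e = v \<and> i < k},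
     src = (\<lambda>(e, i). if src G e = v then (v, p e) else (src G e, 0)),
     rng = (\<lambda>(e, i). if rng G e = v then (v, i) else (rng G e, 0))\<rparr>"

definition move_I_cond :: "('v, 'e) graph \<Rightarrow> 'v \<Rightarrow> nat \<Rightarrow> ('e \<Rightarrow> nat) \<Rightarrow> bool" where
  "move_I_cond G v k q \<longleftrightarrow> is_regular G v \<and> \<not> is_source G v \<and> 1 \<le> k \<and>
     q ` in_edges G v = {0..<k}"

definition move_I :: "('v, 'e) graph \<Rightarrow> 'v \<Rightarrow> nat \<Rightarrow> ('e \<Rightarrow> nat) \<Rightarrow> ('v \<times> nat, 'e \<times> nat) graph" where
  "move_I G v k q = \<lparr>
     verts = {(w, 0) | w. w \<in> verts G \<and> w \<noteq> v} \<union> {(v, i) | i. i < k},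
     edges = {(e, 0) | e. e \<in> edges G \<and> src G e \<noteq> v} \<union>
             {(e, i) | e i. e \<in> edges G \<and> src G e = v \<and> i < k},
     src = (\<lambda>(e, i). if src G e = v then (v, i) else (src G e, 0)),
     rng = (\<lambda>(e, i). if rng G e = v then (v, q e) else (rng G e, 0))\<rparr>"

text \<open>Graphs are represented on the countable universe nat; all graphs in the
  equivalence class of a countable graph are countable.\<close>
type_synonym ngraph = "(nat, nat) graph"

definition one_move :: "ngraph \<Rightarrow> ngraph \<Rightarrow> bool" where
  "one_move G H \<longleftrightarrow> wf_graph G \<and>
     ((\<exists>v. move_S_cond G v \<and> graph_iso (move_S G v) H) \<or>
      (\<exists>u f v. move_R_cond G u f v \<and> graph_iso (move_R G u f) H) \<or>
      (\<exists>v k p. move_O_cond G v k p \<and> graph_iso (move_O G v k p) H) \<or>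
      (\<exists>v k q. move_I_cond G v k q \<and> graph_iso (move_I G v k q) H))"

definition move_equiv_nat :: "ngraph \<Rightarrow> ngraph \<Rightarrow> bool" where
  "move_equiv_nat = (sup one_move one_move\<inverse>\<inverse>)\<^sup>*\<^sup>*"

definition move_equiv :: "('v1, 'e1) graph \<Rightarrow> ('v2, 'e2) graph \<Rightarrow> bool" where
  "move_equiv G H \<longleftrightarrow> (\<exists>G' H' :: ngraph. graph_iso G G' \<and> graph_iso H H' \<and> move_equiv_nat G' H')"

definition graph_of_mat :: "nat \<Rightarrow> (nat \<Rightarrow> nat \<Rightarrow> enat) \<Rightarrow> (nat, nat \<times> nat \<times> nat) graph" where
  "graph_of_mat n A = \<lparr>verts = {0..<n},
     edges = {(x, y, k). x < n \<and> y < n \<and> enat k < A x y},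
     src = (\<lambda>(x, y, k). x), rng = (\<lambda>(x, y, k). y)\<rparr>"

definition mat_move_equiv :: "nat \<Rightarrow> (nat \<Rightarrow> nat \<Rightarrow> enat) \<Rightarrow> (nat \<Rightarrow> nat \<Rightarrow> enat) \<Rightarrow> bool" where
  "mat_move_equiv n A B \<longleftrightarrow> move_equiv (graph_of_mat n A) (graph_of_mat n B)"

definition J_mat :: "nat \<Rightarrow> nat \<Rightarrow> nat \<Rightarrow> nat \<Rightarrow> enat" where
  "J_mat n m i j = (if i < m then (if i = j then 1 else 0) else \<infinity>)"

definition D_mat :: "nat \<Rightarrow> nat \<Rightarrow> nat \<Rightarrow> nat \<Rightarrow> nat \<Rightarrow> nat" where
  "D_mat n m d i j = (if i < m then d else 0)"

definition mat_plus :: "(nat \<Rightarrow> nat \<Rightarrow> enat) \<Rightarrow> (nat \<Rightarrow> nat \<Rightarrow> nat) \<Rightarrow> nat \<Rightarrow> nat \<Rightarrow> enat" where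
  "mat_plus A C i j = A i j + enat (C i j)"

definition real_mat_of :: "nat \<Rightarrow> (nat \<Rightarrow> nat \<Rightarrow> nat) \<Rightarrow> real mat" where
  "real_mat_of n C = mat n n (\<lambda>(i, j). real (C i j))"

end

theory Submission
  imports Defs "HOL-Library.Countable_Set"
begin


definition iso_by :: "('v1 \<Rightarrow> 'v2) \<Rightarrow> ('e1 \<Rightarrow> 'e2) \<Rightarrow> ('v1, 'e1) graph \<Rightarrow> ('v2, 'e2) graph \<Rightarrow> bool" where
  "iso_by \<phi> \<psi> G H \<longleftrightarrow> bij_betw \<phi> (verts G) (verts H) \<and> bij_betw \<psi> (edges G) (edges H) \<and>
     (\<forall>e \<in> edges G. src H (\<psi> e) = \<phi> (src G e) \<and> rng H (\<psi> e) = \<phi> (rng G e))"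

lemma graph_iso_iff: "graph_iso G H \<longleftrightarrow> (\<exists>\<phi> \<psi>. iso_by \<phi> \<psi> G H)"
  unfolding graph_iso_def iso_by_def by blast

lemma iso_by_trans: "iso_by \<phi> \<psi> G H \<Longrightarrow> iso_by \<phi>' \<psi>' H K \<Longrightarrow> iso_by (\<phi>' \<circ> \<phi>) (\<psi>' \<circ> \<psi>) G K"
proof -
  assume a: "iso_by \<phi> \<psi> G H" and b: "iso_by \<phi>' \<psi>' H K"
  have "\<forall>e\<in>edges G. \<psi> e \<in> edges H" using a unfolding iso_by_def bij_betw_def by auto
  then show ?thesis using a b unfolding iso_by_def by (auto intro: bij_betw_trans)
qed

lemma iso_by_sym:
  assumes "iso_by \<phi> \<psi> G H" "wf_graph G"
  shows "iso_by (inv_into (verts G) \<phi>) (inv_into (edges G) \<psi>) H G"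
proof -
  have b1: "bij_betw \<phi> (verts G) (verts H)" and b2: "bij_betw \<psi> (edges G) (edges H)"
    and c: "\<forall>e \<in> edges G. src H (\<psi> e) = \<phi> (src G e) \<and> rng H (\<psi> e) = \<phi> (rng G e)"
    using assms unfolding iso_by_def by auto
  have "\<forall>e' \<in> edges H. src G (inv_into (edges G) \<psi> e') = inv_into (verts G) \<phi> (src H e') \<and>
        rng G (inv_into (edges G) \<psi> e') = inv_into (verts G) \<phi> (rng H e')"
  proof
    fix e' assume e': "e' \<in> edges H"
    define e where "e = inv_into (edges G) \<psi> e'"
    have e: "e \<in> edges G" "\<psi> e = e'" using b2 e' unfolding e_def
      by (auto simp: bij_betw_def inv_into_into f_inv_into_f)
    have s: "src G e \<in> verts G" "rng G e \<in> verts G" using assms(2) e(1) unfolding wf_graph_def by auto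
    show "src G (inv_into (edges G) \<psi> e') = inv_into (verts G) \<phi> (src H e') \<and>
        rng G (inv_into (edges G) \<psi> e') = inv_into (verts G) \<phi> (rng H e')"
      using c e s b1 unfolding e_def[symmetric] by (auto simp: bij_betw_def)
  qed
  then show ?thesis unfolding iso_by_def using b1 b2 by (auto intro: bij_betw_inv_into)
qed

lemma graph_iso_refl: "graph_iso G G"
  unfolding graph_iso_iff iso_by_def by (rule exI[of _ id], rule exI[of _ id]) auto

lemma graph_iso_trans: "graph_iso G H \<Longrightarrow> graph_iso H K \<Longrightarrow> graph_iso G K"
  unfolding graph_iso_iff by (blast intro: iso_by_trans)

lemma graph_iso_sym: "graph_iso G H \<Longrightarrow> wf_graph G \<Longrightarrow> graph_iso H G"
  unfolding graph_iso_iff by (blast intro: iso_by_sym)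

lemma iso_by_wf: "iso_by \<phi> \<psi> G H \<Longrightarrow> wf_graph G \<Longrightarrow> wf_graph H"
  unfolding iso_by_def wf_graph_def bij_betw_def
  apply (safe)
    apply (metis finite_imageI)
   apply (metis imageI image_iff)
  apply (metis imageI image_iff)
  done

definition enc :: "('v::countable, 'e::countable) graph \<Rightarrow> ngraph" where
  "enc G = \<lparr>verts = to_nat ` verts G, edges = to_nat ` edges G,
     src = (\<lambda>x. to_nat (src G (from_nat x))), rng = (\<lambda>x. to_nat (rng G (from_nat x)))\<rparr>"

lemma iso_by_enc: "iso_by to_nat to_nat G (enc G)"
  unfolding iso_by_def enc_def by (auto simp: bij_betw_def inj_on_def)

lemma graph_iso_enc: "graph_iso G (enc G)"
  using iso_by_enc graph_iso_iff by blast

lemma iso_out_edges: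
  assumes "iso_by \<phi> \<psi> G H" "wf_graph G" "v \<in> verts G"
  shows "out_edges H (\<phi> v) = \<psi> ` out_edges G v"
proof -
  have b1: "bij_betw \<phi> (verts G) (verts H)" and b2: "bij_betw \<psi> (edges G) (edges H)"
    and c: "\<forall>e \<in> edges G. src H (\<psi> e) = \<phi> (src G e) \<and> rng H (\<psi> e) = \<phi> (rng G e)"
    using assms unfolding iso_by_def by auto
  show ?thesis
  proof (intro equalityI subsetI)
    fix e' assume "e' \<in> out_edges H (\<phi> v)"
    then have e': "e' \<in> edges H" "src H e' = \<phi> v" unfolding out_edges_def by auto
    then obtain e where e: "e \<in> edges G" "e' = \<psi> e" using b2 unfolding bij_betw_def by auto
    have "src G e \<in> verts G" using assms(2) e unfolding wf_graph_def by auto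
    then have "src G e = v" using c e e' b1 assms(3) unfolding bij_betw_def inj_on_def by metis
    then show "e' \<in> \<psi> ` out_edges G v" using e unfolding out_edges_def by auto
  next
    fix e' assume "e' \<in> \<psi> ` out_edges G v"
    then show "e' \<in> out_edges H (\<phi> v)" using b2 c unfolding out_edges_def bij_betw_def by auto
  qed
qed

lemma iso_in_edges:
  assumes "iso_by \<phi> \<psi> G H" "wf_graph G" "v \<in> verts G"
  shows "in_edges H (\<phi> v) = \<psi> ` in_edges G v"
proof -
  have b1: "bij_betw \<phi> (verts G) (verts H)" and b2: "bij_betw \<psi> (edges G) (edges H)"
    and c: "\<forall>e \<in> edges G. src H (\<psi> e) = \<phi> (src G e) \<and> rng H (\<psi> e) = \<phi> (rng G e)"
    using assms unfolding iso_by_def by auto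
  show ?thesis
  proof (intro equalityI subsetI)
    fix e' assume "e' \<in> in_edges H (\<phi> v)"
    then have e': "e' \<in> edges H" "rng H e' = \<phi> v" unfolding in_edges_def by auto
    then obtain e where e: "e \<in> edges G" "e' = \<psi> e" using b2 unfolding bij_betw_def by auto
    have "rng G e \<in> verts G" using assms(2) e unfolding wf_graph_def by auto
    then have "rng G e = v" using c e e' b1 assms(3) unfolding bij_betw_def inj_on_def by metis
    then show "e' \<in> \<psi> ` in_edges G v" using e unfolding in_edges_def by auto
  next
    fix e' assume "e' \<in> \<psi> ` in_edges G v"
    then show "e' \<in> in_edges H (\<phi> v)" using b2 c unfolding in_edges_def bij_betw_def by auto
  qed
qed

lemma iso_inj_edges: "iso_by \<phi> \<psi> G H \<Longrightarrow> inj_on \<psi> (edges G)"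
  unfolding iso_by_def bij_betw_def by auto
lemma iso_inj_verts: "iso_by \<phi> \<psi> G H \<Longrightarrow> inj_on \<phi> (verts G)"
  unfolding iso_by_def bij_betw_def by auto

lemma out_edges_sub: "out_edges G v \<subseteq> edges G" unfolding out_edges_def by auto
lemma in_edges_sub: "in_edges G v \<subseteq> edges G" unfolding in_edges_def by auto

lemma iso_regular:
  assumes "iso_by \<phi> \<psi> G H" "wf_graph G" "v \<in> verts G"
  shows "is_regular H (\<phi> v) \<longleftrightarrow> is_regular G v"
  and "is_sink H (\<phi> v) \<longleftrightarrow> is_sink G v"
  and "is_source H (\<phi> v) \<longleftrightarrow> is_source G v"
proof -
  have inj: "inj_on \<psi> (out_edges G v)"
    using iso_inj_edges[OF assms(1)] out_edges_sub by (metis inj_on_subset)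
  have vH: "\<phi> v \<in> verts H" using assms(1,3) unfolding iso_by_def bij_betw_def by auto
  show "is_regular H (\<phi> v) \<longleftrightarrow> is_regular G v"
    unfolding is_regular_def is_sink_def is_inf_emitter_def iso_out_edges[OF assms]
    using finite_image_iff[OF inj] vH assms(3) by auto
  show "is_sink H (\<phi> v) \<longleftrightarrow> is_sink G v"
    unfolding is_sink_def iso_out_edges[OF assms] by auto
  show "is_source H (\<phi> v) \<longleftrightarrow> is_source G v"
    unfolding is_source_def iso_in_edges[OF assms] by auto
qed



lemma bij_betw_restrict: "bij_betw f A B \<Longrightarrow> A' \<subseteq> A \<Longrightarrow> f ` A' = B' \<Longrightarrow> bij_betw f A' B'"
  by (metis bij_betw_subset)

lemma iso_parts:
  assumes "iso_by \<phi> \<psi> G H"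
  shows "inj_on \<phi> (verts G)" "\<phi> ` verts G = verts H" "inj_on \<psi> (edges G)" "\<psi> ` edges G = edges H"
    "\<And>e. e \<in> edges G \<Longrightarrow> src H (\<psi> e) = \<phi> (src G e)"
    "\<And>e. e \<in> edges G \<Longrightarrow> rng H (\<psi> e) = \<phi> (rng G e)"
  using assms unfolding iso_by_def bij_betw_def by auto

lemma S_transport:
  assumes iso: "iso_by \<phi> \<psi> G H" and wf: "wf_graph G" and c: "move_S_cond G v"
  shows "move_S_cond H (\<phi> v) \<and> iso_by \<phi> \<psi> (move_S G v) (move_S H (\<phi> v))"
proof -
  note P = iso_parts[OF iso]
  have vG: "v \<in> verts G" using c unfolding move_S_cond_def is_regular_def by auto
  have c': "move_S_cond H (\<phi> v)" using c iso_regular[OF iso wf vG] unfolding move_S_cond_def by auto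
  have sv: "\<And>e. e \<in> edges G \<Longrightarrow> src G e \<in> verts G" using wf unfolding wf_graph_def by auto
  have "\<psi> ` {e \<in> edges G. src G e \<noteq> v} = {e \<in> edges H. src H e \<noteq> \<phi> v}"
  proof (intro equalityI subsetI)
    fix x assume "x \<in> \<psi> ` {e \<in> edges G. src G e \<noteq> v}"
    then obtain e where "e \<in> edges G" "src G e \<noteq> v" "x = \<psi> e" by auto
    then show "x \<in> {e \<in> edges H. src H e \<noteq> \<phi> v}" using P sv vG by (auto simp: inj_on_eq_iff)
  next
    fix x assume "x \<in> {e \<in> edges H. src H e \<noteq> \<phi> v}"
    then have "src H x \<noteq> \<phi> v" "x \<in> \<psi> ` edges G" using P(4) by auto
    then obtain e where "e \<in> edges G" "x = \<psi> e" "src H x \<noteq> \<phi> v" by blast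
    then show "x \<in> \<psi> ` {e \<in> edges G. src G e \<noteq> v}" using P by auto
  qed
  moreover have "\<phi> ` (verts G - {v}) = verts H - {\<phi> v}" using P vG by (auto simp: inj_on_eq_iff)
  ultimately have "iso_by \<phi> \<psi> (move_S G v) (move_S H (\<phi> v))"
    unfolding iso_by_def move_S_def graph.simps bij_betw_def
  proof (intro conjI)
    show "inj_on \<phi> (verts G - {v})" using P(1) by (rule inj_on_subset) blast
    show "inj_on \<psi> {e \<in> edges G. src G e \<noteq> v}" using P(3) by (rule inj_on_subset) blast
    show "\<forall>e\<in>{e \<in> edges G. src G e \<noteq> v}. src H (\<psi> e) = \<phi> (src G e) \<and> rng H (\<psi> e) = \<phi> (rng G e)"
      using P(5,6) by blast
  qed
  then show ?thesis using c' by auto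
qed

lemma inj_map_sum_on:
  assumes "inj_on \<psi> E" "A \<subseteq> E" "B \<subseteq> E"
  shows "inj_on (map_sum \<psi> \<psi>) (Inl ` A \<union> Inr ` B)"
proof (rule inj_onI)
  fix x y assume x: "x \<in> Inl ` A \<union> Inr ` B" and y: "y \<in> Inl ` A \<union> Inr ` B"
    and eq: "map_sum \<psi> \<psi> x = map_sum \<psi> \<psi> y"
  from x y eq show "x = y"
    by (elim UnE imageE; simp; metis assms inj_onD subsetD)
qed

lemma map_sum_image_Un: "map_sum \<psi> \<psi> ` (Inl ` A \<union> Inr ` B) = Inl ` (\<psi> ` A) \<union> Inr ` (\<psi> ` B)"
  by (simp add: image_Un image_image)

lemma R_transport:
  assumes iso: "iso_by \<phi> \<psi> G H" and wf: "wf_graph G" and c: "move_R_cond G u f v"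
  shows "move_R_cond H (\<phi> u) (\<psi> f) (\<phi> v) \<and> iso_by \<phi> (map_sum \<psi> \<psi>) (move_R G u f) (move_R H (\<phi> u) (\<psi> f))"
proof -
  note P = iso_parts[OF iso]
  have cc: "u \<in> verts G \<and> is_regular G u \<and> out_edges G u = {f} \<and> rng G f \<noteq> u \<and> src G ` in_edges G u = {v}"
    using c unfolding move_R_cond_def .
  note uG = cc[THEN conjunct1] and reg = cc[THEN conjunct2, THEN conjunct1]
    and out = cc[THEN conjunct2, THEN conjunct2, THEN conjunct1]
    and r = cc[THEN conjunct2, THEN conjunct2, THEN conjunct2, THEN conjunct1]
    and s = cc[THEN conjunct2, THEN conjunct2, THEN conjunct2, THEN conjunct2]
  have fE: "f \<in> edges G" using out_edges_sub[of G u] unfolding out by simp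
  have rf: "rng G f \<in> verts G" using wf fE unfolding wf_graph_def by auto
  have inE: "in_edges G u \<subseteq> edges G" by (rule in_edges_sub)
  have "src H ` in_edges H (\<phi> u) = (\<lambda>e. \<phi> (src G e)) ` in_edges G u"
    unfolding iso_in_edges[OF iso wf uG] image_image
    by (intro image_cong refl) (use P(5) inE in blast)
  also have "\<dots> = \<phi> ` (src G ` in_edges G u)" by (simp add: image_image)
  finally have srcs: "src H ` in_edges H (\<phi> u) = {\<phi> v}" using s by simp
  have outH: "out_edges H (\<phi> u) = {\<psi> f}" using iso_out_edges[OF iso wf uG] out by simp
  have rH: "rng H (\<psi> f) \<noteq> \<phi> u"
  proof
    assume "rng H (\<psi> f) = \<phi> u"
    then have "\<phi> (rng G f) = \<phi> u" using P(6)[OF fE] by simp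
    then show False using inj_onD[OF P(1) _ rf uG] r by blast
  qed
  have c': "move_R_cond H (\<phi> u) (\<psi> f) (\<phi> v)"
    unfolding move_R_cond_def using iso_regular(1)[OF iso wf uG] reg outH rH srcs
    unfolding is_regular_def by blast
  have "\<psi> ` (edges G - (in_edges G u \<union> {f})) = \<psi> ` edges G - \<psi> ` (in_edges G u \<union> {f})"
    by (rule inj_on_image_set_diff[OF P(3)]) (use inE fE in auto)
  moreover have "edges G - in_edges G u - {f} = edges G - (in_edges G u \<union> {f})" by blast
  moreover have "edges H - in_edges H (\<phi> u) - {\<psi> f} = edges H - (in_edges H (\<phi> u) \<union> {\<psi> f})" by blast
  ultimately have img1: "\<psi> ` (edges G - in_edges G u - {f}) = edges H - in_edges H (\<phi> u) - {\<psi> f}"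
    unfolding iso_in_edges[OF iso wf uG] P(4) by (simp add: image_Un)
  have img2: "\<psi> ` in_edges G u = in_edges H (\<phi> u)" using iso_in_edges[OF iso wf uG] by simp
  have E: "edges (move_R H (\<phi> u) (\<psi> f)) = map_sum \<psi> \<psi> ` edges (move_R G u f)"
    unfolding move_R_def graph.simps map_sum_image_Un
    unfolding img1[symmetric] unfolding img2[symmetric] ..
  have inj: "inj_on (map_sum \<psi> \<psi>) (edges (move_R G u f))"
    unfolding move_R_def graph.simps by (rule inj_map_sum_on[OF P(3)]) (use inE in auto)
  have V: "\<phi> ` (verts G - {u}) = verts H - {\<phi> u}"
    by (simp add: P(2)[symmetric] inj_on_image_set_diff[OF P(1)] uG)
  have "iso_by \<phi> (map_sum \<psi> \<psi>) (move_R G u f) (move_R H (\<phi> u) (\<psi> f))"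
    unfolding iso_by_def
  proof (intro conjI)
    show "bij_betw \<phi> (verts (move_R G u f)) (verts (move_R H (\<phi> u) (\<psi> f)))"
      unfolding move_R_def graph.simps bij_betw_def using V inj_on_subset[OF P(1)] by auto
    show "bij_betw (map_sum \<psi> \<psi>) (edges (move_R G u f)) (edges (move_R H (\<phi> u) (\<psi> f)))"
      using E inj by (simp add: bij_betw_def)
    show "\<forall>e\<in>edges (move_R G u f). src (move_R H (\<phi> u) (\<psi> f)) (map_sum \<psi> \<psi> e) = \<phi> (src (move_R G u f) e) \<and>
        rng (move_R H (\<phi> u) (\<psi> f)) (map_sum \<psi> \<psi> e) = \<phi> (rng (move_R G u f) e)"
    proof
      fix e assume "e \<in> edges (move_R G u f)"
      then consider (l) x where "e = Inl x" "x \<in> edges G" | (r) x where "e = Inr x" "x \<in> edges G"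
        unfolding move_R_def graph.simps using inE by blast
      then show "src (move_R H (\<phi> u) (\<psi> f)) (map_sum \<psi> \<psi> e) = \<phi> (src (move_R G u f) e) \<and>
        rng (move_R H (\<phi> u) (\<psi> f)) (map_sum \<psi> \<psi> e) = \<phi> (rng (move_R G u f) e)"
      proof cases
        case l then show ?thesis unfolding move_R_def by (simp add: P(5,6))
      next
        case r then show ?thesis unfolding move_R_def by (simp add: P(5,6) fE)
      qed
    qed
  qed
  then show ?thesis using c' by auto
qed



lemma vset_eq: "{(w, 0::nat) | w. w \<in> V \<and> w \<noteq> v} \<union> {(v, i) | i. i < k} = (\<lambda>w. (w, 0)) ` (V - {v}) \<union> {v} \<times> {..<k}"
  by auto

lemma eset_eq_in: "{(e, 0::nat) | e. e \<in> edges G \<and> rng G e \<noteq> v} \<union> {(e, i) | e i. e \<in> edges G \<and> rng G e = v \<and> i < k}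
   = (\<lambda>e. (e, 0)) ` (edges G - in_edges G v) \<union> in_edges G v \<times> {..<k}"
  unfolding in_edges_def by auto

lemma eset_eq_out: "{(e, 0::nat) | e. e \<in> edges G \<and> src G e \<noteq> v} \<union> {(e, i) | e i. e \<in> edges G \<and> src G e = v \<and> i < k}
   = (\<lambda>e. (e, 0)) ` (edges G - out_edges G v) \<union> out_edges G v \<times> {..<k}"
  unfolding out_edges_def by auto

lemma mp_times: "map_prod f id ` (X \<times> Y) = f ` X \<times> Y"
  by (simp add: map_prod_surj_on)

lemma img_pair_set:
  assumes "inj_on f A" "X \<subseteq> A" "f ` A = A'" "f ` X = X'"
  shows "map_prod f id ` ((\<lambda>e. (e, 0::nat)) ` (A - X) \<union> X \<times> {..<k}) = (\<lambda>e. (e, 0)) ` (A' - X') \<union> X' \<times> {..<k}"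
    and "inj_on (map_prod f id) ((\<lambda>e. (e, 0::nat)) ` (A - X) \<union> X \<times> {..<k})"
proof -
  have d: "f ` (A - X) = A' - X'" using inj_on_image_set_diff[OF assms(1) _ assms(2)] assms(3,4) by auto
  show "map_prod f id ` ((\<lambda>e. (e, 0::nat)) ` (A - X) \<union> X \<times> {..<k}) = (\<lambda>e. (e, 0)) ` (A' - X') \<union> X' \<times> {..<k}"
  proof -
    have "map_prod f id ` ((\<lambda>e. (e, 0::nat)) ` (A - X) \<union> X \<times> {..<k}) = (\<lambda>x. (x,0)) ` (f ` (A - X)) \<union> f ` X \<times> {..<k}"
      by (simp add: image_Un image_image mp_times)
    then show ?thesis using d assms(4) by simp
  qed
  have "inj_on (map_prod f id) (A \<times> UNIV)" by (rule map_prod_inj_on[OF assms(1)]) simp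
  then show "inj_on (map_prod f id) ((\<lambda>e. (e, 0::nat)) ` (A - X) \<union> X \<times> {..<k})"
    by (rule inj_on_subset) (use assms(2) in auto)
qed

lemma iso_complement:
  assumes "iso_by \<phi> \<psi> G H" "wf_graph G" "v \<in> verts G"
  shows "\<phi> ` (verts G - {v}) = verts H - {\<phi> v}"
  using iso_parts[OF assms(1)] assms(3) by (simp add: inj_on_image_set_diff)

lemma iso_vset:
  assumes "iso_by \<phi> \<psi> G H" "wf_graph G" "v \<in> verts G"
  shows "bij_betw (map_prod \<phi> id) ({(w, 0::nat) | w. w \<in> verts G \<and> w \<noteq> v} \<union> {(v, i) | i. i < k})
      ({(w, 0::nat) | w. w \<in> verts H \<and> w \<noteq> \<phi> v} \<union> {(\<phi> v, i) | i. i < k})"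
proof -
  note P = iso_parts[OF assms(1)]
  have a: "map_prod \<phi> id ` ((\<lambda>w. (w, 0::nat)) ` (verts G - {v}) \<union> {v} \<times> {..<k})
    = (\<lambda>w. (w, 0::nat)) ` (verts H - {\<phi> v}) \<union> {\<phi> v} \<times> {..<k}"
  proof -
    have "map_prod \<phi> id ` ((\<lambda>w. (w, 0::nat)) ` (verts G - {v}) \<union> {v} \<times> {..<k}) = (\<lambda>x. (x,0)) ` (\<phi> ` (verts G - {v})) \<union> \<phi> ` {v} \<times> {..<k}"
      by (simp add: image_Un image_image mp_times)
    then show ?thesis using iso_complement[OF assms] by simp
  qed
  have "inj_on (map_prod \<phi> id) (verts G \<times> UNIV)" by (rule map_prod_inj_on[OF P(1)]) simp
  then have b: "inj_on (map_prod \<phi> id) ((\<lambda>w. (w, 0::nat)) ` (verts G - {v}) \<union> {v} \<times> {..<k})"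
    by (rule inj_on_subset) (use assms(3) in auto)
  show ?thesis unfolding vset_eq bij_betw_def using a b by simp
qed

lemma O_transport:
  assumes iso: "iso_by \<phi> \<psi> G H" and wf: "wf_graph G" and c: "move_O_cond G v k p"
  defines "p' \<equiv> p \<circ> inv_into (edges G) \<psi>"
  shows "move_O_cond H (\<phi> v) k p' \<and> iso_by (map_prod \<phi> id) (map_prod \<psi> id) (move_O G v k p) (move_O H (\<phi> v) k p')"
proof -
  note P = iso_parts[OF iso]
  have cc: "v \<in> verts G \<and> \<not> is_sink G v \<and> 1 \<le> k \<and> p ` out_edges G v = {0..<k} \<and>
     (\<forall>i<k. \<forall>j<k. infinite {e \<in> out_edges G v. p e = i} \<and>
                  infinite {e \<in> out_edges G v. p e = j} \<longrightarrow> i = j)"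
    using c unfolding move_O_cond_def .
  note vG = cc[THEN conjunct1] and ns = cc[THEN conjunct2, THEN conjunct1]
    and k1 = cc[THEN conjunct2, THEN conjunct2, THEN conjunct1]
    and img = cc[THEN conjunct2, THEN conjunct2, THEN conjunct2, THEN conjunct1]
    and inf = cc[THEN conjunct2, THEN conjunct2, THEN conjunct2, THEN conjunct2]
  have outH: "out_edges H (\<phi> v) = \<psi> ` out_edges G v" by (rule iso_out_edges[OF iso wf vG])
  have pinv: "\<And>e. e \<in> edges G \<Longrightarrow> p' (\<psi> e) = p e"
    unfolding p'_def using P(3) by (simp add: inv_into_f_f)
  have oE: "out_edges G v \<subseteq> edges G" by (rule out_edges_sub)
  have img': "p' ` out_edges H (\<phi> v) = {0..<k}"
  proof -
    have "p' ` out_edges H (\<phi> v) = (\<lambda>e. p' (\<psi> e)) ` out_edges G v" unfolding outH image_image ..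
    also have "\<dots> = p ` out_edges G v" by (rule image_cong) (use pinv oE in auto)
    finally show ?thesis using img by simp
  qed
  have part: "{e \<in> out_edges H (\<phi> v). p' e = i} = \<psi> ` {e \<in> out_edges G v. p e = i}" for i
    unfolding outH using pinv oE by auto
  have inj_part: "inj_on \<psi> {e \<in> out_edges G v. p e = i}" for i
    by (rule inj_on_subset[OF P(3)]) (use oE in auto)
  have inf': "\<forall>i<k. \<forall>j<k. infinite {e \<in> out_edges H (\<phi> v). p' e = i} \<and>
                  infinite {e \<in> out_edges H (\<phi> v). p' e = j} \<longrightarrow> i = j"
    unfolding part finite_image_iff[OF inj_part] using inf by blast
  have c': "move_O_cond H (\<phi> v) k p'"
    unfolding move_O_cond_def using iso_regular(2)[OF iso wf vG] ns k1 img' inf' P(2) vG by blast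
  have ev: "bij_betw (map_prod \<psi> id) (edges (move_O G v k p)) (edges (move_O H (\<phi> v) k p'))"
    unfolding move_O_def graph.simps eset_eq_in bij_betw_def
    using img_pair_set[OF P(3) in_edges_sub P(4) iso_in_edges[OF iso wf vG, symmetric]] by simp
  have vv: "bij_betw (map_prod \<phi> id) (verts (move_O G v k p)) (verts (move_O H (\<phi> v) k p'))"
    unfolding move_O_def graph.simps by (rule iso_vset[OF iso wf vG])
  have sv: "src G e \<in> verts G" "rng G e \<in> verts G" if "e \<in> edges G" for e
    using wf that unfolding wf_graph_def by auto
  have eqv: "\<phi> x = \<phi> v \<longleftrightarrow> x = v" if "x \<in> verts G" for x
    using inj_on_eq_iff[OF P(1) that vG] .
  have compat: "\<forall>e\<in>edges (move_O G v k p). src (move_O H (\<phi> v) k p') (map_prod \<psi> id e) = map_prod \<phi> id (src (move_O G v k p) e) \<and>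
        rng (move_O H (\<phi> v) k p') (map_prod \<psi> id e) = map_prod \<phi> id (rng (move_O G v k p) e)"
  proof
    fix x assume "x \<in> edges (move_O G v k p)"
    then obtain e i where x: "x = (e, i)" "e \<in> edges G" unfolding move_O_def by auto
    show "src (move_O H (\<phi> v) k p') (map_prod \<psi> id x) = map_prod \<phi> id (src (move_O G v k p) x) \<and>
        rng (move_O H (\<phi> v) k p') (map_prod \<psi> id x) = map_prod \<phi> id (rng (move_O G v k p) x)"
      unfolding move_O_def x using P(5,6)[OF x(2)] eqv[OF sv(1)[OF x(2)]] eqv[OF sv(2)[OF x(2)]] pinv[OF x(2)]
      by simp
  qed
  show ?thesis using c' ev vv compat unfolding iso_by_def by blast
qed

lemma I_transport:
  assumes iso: "iso_by \<phi> \<psi> G H" and wf: "wf_graph G" and c: "move_I_cond G v k q"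
  defines "q' \<equiv> q \<circ> inv_into (edges G) \<psi>"
  shows "move_I_cond H (\<phi> v) k q' \<and> iso_by (map_prod \<phi> id) (map_prod \<psi> id) (move_I G v k q) (move_I H (\<phi> v) k q')"
proof -
  note P = iso_parts[OF iso]
  have cc: "is_regular G v \<and> \<not> is_source G v \<and> 1 \<le> k \<and> q ` in_edges G v = {0..<k}"
    using c unfolding move_I_cond_def .
  note reg = cc[THEN conjunct1] and ns = cc[THEN conjunct2, THEN conjunct1]
    and k1 = cc[THEN conjunct2, THEN conjunct2, THEN conjunct1]
    and img = cc[THEN conjunct2, THEN conjunct2, THEN conjunct2]
  have vG: "v \<in> verts G" using reg unfolding is_regular_def by simp
  have inH: "in_edges H (\<phi> v) = \<psi> ` in_edges G v" by (rule iso_in_edges[OF iso wf vG])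
  have qinv: "\<And>e. e \<in> edges G \<Longrightarrow> q' (\<psi> e) = q e"
    unfolding q'_def using P(3) by (simp add: inv_into_f_f)
  have iE: "in_edges G v \<subseteq> edges G" by (rule in_edges_sub)
  have img': "q' ` in_edges H (\<phi> v) = {0..<k}"
  proof -
    have "q' ` in_edges H (\<phi> v) = (\<lambda>e. q' (\<psi> e)) ` in_edges G v" unfolding inH image_image ..
    also have "\<dots> = q ` in_edges G v" by (rule image_cong) (use qinv iE in auto)
    finally show ?thesis using img by simp
  qed
  have c': "move_I_cond H (\<phi> v) k q'"
    unfolding move_I_cond_def using iso_regular(1,3)[OF iso wf vG] reg ns k1 img' by blast
  have ev: "bij_betw (map_prod \<psi> id) (edges (move_I G v k q)) (edges (move_I H (\<phi> v) k q'))"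
    unfolding move_I_def graph.simps eset_eq_out bij_betw_def
    using img_pair_set[OF P(3) out_edges_sub P(4) iso_out_edges[OF iso wf vG, symmetric]] by simp
  have vv: "bij_betw (map_prod \<phi> id) (verts (move_I G v k q)) (verts (move_I H (\<phi> v) k q'))"
    unfolding move_I_def graph.simps by (rule iso_vset[OF iso wf vG])
  have sv: "src G e \<in> verts G" "rng G e \<in> verts G" if "e \<in> edges G" for e
    using wf that unfolding wf_graph_def by auto
  have eqv: "\<phi> x = \<phi> v \<longleftrightarrow> x = v" if "x \<in> verts G" for x
    using inj_on_eq_iff[OF P(1) that vG] .
  have compat: "\<forall>e\<in>edges (move_I G v k q). src (move_I H (\<phi> v) k q') (map_prod \<psi> id e) = map_prod \<phi> id (src (move_I G v k q) e) \<and>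
        rng (move_I H (\<phi> v) k q') (map_prod \<psi> id e) = map_prod \<phi> id (rng (move_I G v k q) e)"
  proof
    fix x assume "x \<in> edges (move_I G v k q)"
    then obtain e i where x: "x = (e, i)" "e \<in> edges G" unfolding move_I_def by auto
    show "src (move_I H (\<phi> v) k q') (map_prod \<psi> id x) = map_prod \<phi> id (src (move_I G v k q) x) \<and>
        rng (move_I H (\<phi> v) k q') (map_prod \<psi> id x) = map_prod \<phi> id (rng (move_I G v k q) x)"
      unfolding move_I_def x using P(5,6)[OF x(2)] eqv[OF sv(1)[OF x(2)]] eqv[OF sv(2)[OF x(2)]] qinv[OF x(2)]
      by simp
  qed
  show ?thesis using c' ev vv compat unfolding iso_by_def by blast
qed



lemma wf_enc: "wf_graph G \<Longrightarrow> wf_graph (enc G)"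
  using iso_by_wf[OF iso_by_enc] .

definition good :: "('v, 'e) graph \<Rightarrow> bool" where
  "good G \<longleftrightarrow> wf_graph G \<and> edges G \<noteq> {}"

lemma good_iso: "iso_by \<phi> \<psi> G H \<Longrightarrow> good G \<Longrightarrow> good H"
  unfolding good_def using iso_by_wf iso_parts(4) by blast

lemma one_move_of_iso:
  fixes G H :: ngraph
  assumes g: "good G" and iso: "graph_iso G H"
  shows "one_move G H"
proof -
  have wf: "wf_graph G" using g unfolding good_def by simp
  obtain e where e: "e \<in> edges G" using g unfolding good_def by blast
  define v where "v = src G e"
  have vG: "v \<in> verts G" using wf e unfolding wf_graph_def v_def by auto
  have eo: "e \<in> out_edges G v" using e unfolding out_edges_def v_def by simp
  have ns: "\<not> is_sink G v" using eo unfolding is_sink_def by blast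
  have img: "(\<lambda>_. 0::nat) ` out_edges G v = {0..<1}" using eo by auto
  have c: "move_O_cond G v 1 (\<lambda>_. 0)"
    unfolding move_O_cond_def using vG ns img by auto
  have V: "verts (move_O G v 1 (\<lambda>_. 0)) = verts G \<times> {0}"
    unfolding move_O_def using vG by auto
  have E: "edges (move_O G v 1 (\<lambda>_. 0)) = edges G \<times> {0}"
    unfolding move_O_def by auto
  have "iso_by fst fst (move_O G v 1 (\<lambda>_. 0)) G"
    unfolding iso_by_def V E
  proof (intro conjI)
    show "bij_betw fst (verts G \<times> {0::nat}) (verts G)" by (auto simp: bij_betw_def inj_on_def)
    show "bij_betw fst (edges G \<times> {0::nat}) (edges G)" by (auto simp: bij_betw_def inj_on_def)
    show "\<forall>x\<in>edges G \<times> {0}. src G (fst x) = fst (src (move_O G v 1 (\<lambda>_. 0)) x) \<and>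
        rng G (fst x) = fst (rng (move_O G v 1 (\<lambda>_. 0)) x)"
      unfolding move_O_def by auto
  qed
  then have "graph_iso (move_O G v 1 (\<lambda>_. 0)) H" using iso graph_iso_iff graph_iso_trans by blast
  then show ?thesis unfolding one_move_def using wf c by blast
qed

lemma move_equiv_nat_step: "one_move G H \<Longrightarrow> move_equiv_nat G H"
  unfolding move_equiv_nat_def by (rule r_into_rtranclp) simp

lemma move_equiv_nat_trans: "move_equiv_nat G H \<Longrightarrow> move_equiv_nat H K \<Longrightarrow> move_equiv_nat G K"
  unfolding move_equiv_nat_def by (rule rtranclp_trans)

lemma move_equiv_nat_sym: "move_equiv_nat G H \<Longrightarrow> move_equiv_nat H G"
  unfolding move_equiv_nat_def
proof (induction rule: rtranclp_induct)
  case base then show ?case by simp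
next
  case (step y z)
  then have "(sup one_move one_move\<inverse>\<inverse>) z y" by auto
  then show ?case using step(3) by (rule converse_rtranclp_into_rtranclp)
qed

lemma ME_refl: "move_equiv (G :: ('v::countable, 'e::countable) graph) G"
  unfolding move_equiv_def using graph_iso_enc by (blast intro: rtranclp.rtrancl_refl[of _ "enc G"] 
     move_equiv_nat_def[THEN fun_cong, THEN fun_cong, THEN iffD2])

lemma ME_sym: "move_equiv G H \<Longrightarrow> move_equiv H G"
  unfolding move_equiv_def using move_equiv_nat_sym by blast

lemma ME_iso_right: "move_equiv G H \<Longrightarrow> graph_iso H K \<Longrightarrow> wf_graph H \<Longrightarrow> move_equiv G K"
  unfolding move_equiv_def using graph_iso_sym graph_iso_trans by blast

lemma ME_iso_left: "graph_iso G H \<Longrightarrow> move_equiv H K \<Longrightarrow> move_equiv G K"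
  unfolding move_equiv_def using graph_iso_trans by blast

lemma ME_trans:
  assumes "move_equiv G H" "move_equiv H K" "good H"
  shows "move_equiv G K"
proof -
  obtain G1 H1 where a: "graph_iso G G1" "graph_iso H H1" "move_equiv_nat G1 H1" using assms(1) unfolding move_equiv_def by blast
  obtain H2 K2 where b: "graph_iso H H2" "graph_iso K K2" "move_equiv_nat H2 K2" using assms(2) unfolding move_equiv_def by blast
  have wfH: "wf_graph H" using assms(3) unfolding good_def by simp
  obtain \<phi> \<psi> where i1: "iso_by \<phi> \<psi> H H1" using a(2) graph_iso_iff by blast
  have g1: "good H1" using good_iso[OF i1 assms(3)] .
  have "graph_iso H1 H" using graph_iso_sym[OF a(2) wfH] .
  then have "graph_iso H1 H2" using b(1) graph_iso_trans by blast
  then have "move_equiv_nat H1 H2" using one_move_of_iso[OF g1] move_equiv_nat_step by blast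
  then have "move_equiv_nat G1 K2" using a(3) b(3) move_equiv_nat_trans by blast
  then show ?thesis unfolding move_equiv_def using a(1) b(2) by blast
qed

lemma ME_via_nat:
  fixes G :: "('v::countable, 'e::countable) graph" and G' :: ngraph
  assumes "graph_iso G G'" "graph_iso H H'" "one_move G' H'"
  shows "move_equiv G H"
  unfolding move_equiv_def using assms move_equiv_nat_step by blast

lemma ME_O:
  fixes G :: "('v::countable, 'e::countable) graph"
  assumes wf: "wf_graph G" and c: "move_O_cond G v k p"
  shows "move_equiv G (move_O G v k p)"
proof -
  note T = O_transport[OF iso_by_enc wf c]
  let ?M = "move_O (enc G) (to_nat v) k (p \<circ> inv_into (edges G) to_nat)"
  have "one_move (enc G) (enc ?M)"
    unfolding one_move_def using wf_enc[OF wf] T graph_iso_enc by blast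
  moreover have "graph_iso (move_O G v k p) (enc ?M)"
    using T graph_iso_enc graph_iso_iff graph_iso_trans by blast
  ultimately show ?thesis using ME_via_nat graph_iso_enc by blast
qed

lemma ME_I:
  fixes G :: "('v::countable, 'e::countable) graph"
  assumes wf: "wf_graph G" and c: "move_I_cond G v k q"
  shows "move_equiv G (move_I G v k q)"
proof -
  note T = I_transport[OF iso_by_enc wf c]
  let ?M = "move_I (enc G) (to_nat v) k (q \<circ> inv_into (edges G) to_nat)"
  have "one_move (enc G) (enc ?M)"
    unfolding one_move_def using wf_enc[OF wf] T graph_iso_enc by blast
  moreover have "graph_iso (move_I G v k q) (enc ?M)"
    using T graph_iso_enc graph_iso_iff graph_iso_trans by blast
  ultimately show ?thesis using ME_via_nat graph_iso_enc by blast
qed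

lemma ME_R:
  fixes G :: "('v::countable, 'e::countable) graph"
  assumes wf: "wf_graph G" and c: "move_R_cond G u f v"
  shows "move_equiv G (move_R G u f)"
proof -
  note T = R_transport[OF iso_by_enc wf c]
  let ?M = "move_R (enc G) (to_nat u) (to_nat f)"
  have "one_move (enc G) (enc ?M)"
    unfolding one_move_def using wf_enc[OF wf] T graph_iso_enc by blast
  moreover have "graph_iso (move_R G u f) (enc ?M)"
    using T graph_iso_enc graph_iso_iff graph_iso_trans by blast
  ultimately show ?thesis using ME_via_nat graph_iso_enc by blast
qed

lemma ME_S:
  fixes G :: "('v::countable, 'e::countable) graph"
  assumes wf: "wf_graph G" and c: "move_S_cond G v"
  shows "move_equiv G (move_S G v)"
proof -
  note T = S_transport[OF iso_by_enc wf c]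
  let ?M = "move_S (enc G) (to_nat v)"
  have "one_move (enc G) (enc ?M)"
    unfolding one_move_def using wf_enc[OF wf] T graph_iso_enc by blast
  moreover have "graph_iso (move_S G v) (enc ?M)"
    using T graph_iso_enc graph_iso_iff graph_iso_trans by blast
  ultimately show ?thesis using ME_via_nat graph_iso_enc by blast
qed



definition collapse :: "('v, 'e) graph \<Rightarrow> 'v \<Rightarrow> 'e \<Rightarrow> ('v, 'e) graph" where
  "collapse G w f = \<lparr>verts = verts G - {w}, edges = edges G - {f}, src = src G,
     rng = (\<lambda>e. if rng G e = w then rng G f else rng G e)\<rparr>"

definition ccond :: "('v, 'e) graph \<Rightarrow> 'v \<Rightarrow> 'e \<Rightarrow> bool" where
  "ccond G w f \<longleftrightarrow> w \<in> verts G \<and> out_edges G w = {f} \<and> rng G f \<noteq> w"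

lemma ccondD:
  assumes "ccond G w f" "wf_graph G"
  shows "w \<in> verts G" "out_edges G w = {f}" "rng G f \<noteq> w" "f \<in> edges G"
    "\<And>e. e \<in> edges G \<Longrightarrow> src G e = w \<longleftrightarrow> e = f" "src G f = w" "rng G f \<in> verts G"
    "is_regular G w"
proof -
  have cc: "w \<in> verts G \<and> out_edges G w = {f} \<and> rng G f \<noteq> w" using assms(1) unfolding ccond_def .
  show w: "w \<in> verts G" and out: "out_edges G w = {f}" and r: "rng G f \<noteq> w" using cc by auto
  have fo: "f \<in> out_edges G w" unfolding out by simp
  then show fE: "f \<in> edges G" and "src G f = w" unfolding out_edges_def by auto
  show "rng G f \<in> verts G" using assms(2) fE unfolding wf_graph_def by auto
  show "src G e = w \<longleftrightarrow> e = f" if "e \<in> edges G" for e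
  proof
    assume "src G e = w" then have "e \<in> out_edges G w" using that unfolding out_edges_def by simp
    then show "e = f" unfolding out by simp
  next
    assume "e = f" then show "src G e = w" using fo unfolding out_edges_def by simp
  qed
  show "is_regular G w" unfolding is_regular_def is_sink_def is_inf_emitter_def out using w by simp
qed

lemma wf_collapse:
  assumes "wf_graph G" "ccond G w f"
  shows "wf_graph (collapse G w f)"
proof -
  note C = ccondD[OF assms(2,1)]
  have "src G e \<in> verts G - {w} \<and> (if rng G e = w then rng G f else rng G e) \<in> verts G - {w}"
    if "e \<in> edges G - {f}" for e
    using that assms(1) C unfolding wf_graph_def by auto
  then show ?thesis using assms(1) unfolding wf_graph_def collapse_def by auto
qed

lemma collapse_iso:
  assumes iso: "iso_by \<phi> \<psi> G H" and wf: "wf_graph G" and c: "ccond G w f"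
  shows "ccond H (\<phi> w) (\<psi> f) \<and> iso_by \<phi> \<psi> (collapse G w f) (collapse H (\<phi> w) (\<psi> f))"
proof -
  note P = iso_parts[OF iso] and C = ccondD[OF c wf]
  have sv: "src G e \<in> verts G" "rng G e \<in> verts G" if "e \<in> edges G" for e
    using wf that unfolding wf_graph_def by auto
  have eqv: "\<phi> x = \<phi> w \<longleftrightarrow> x = w" if "x \<in> verts G" for x
    using inj_on_eq_iff[OF P(1) that C(1)] .
  have c': "ccond H (\<phi> w) (\<psi> f)"
    unfolding ccond_def using P(2) C(1) iso_out_edges[OF iso wf C(1)] C(2) P(6)[OF C(4)] eqv[OF C(7)] C(3)
    by auto
  have V: "bij_betw \<phi> (verts G - {w}) (verts H - {\<phi> w})"
    unfolding bij_betw_def using iso_complement[OF iso wf C(1)] inj_on_subset[OF P(1)] by auto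
  have E: "bij_betw \<psi> (edges G - {f}) (edges H - {\<psi> f})"
    unfolding bij_betw_def using inj_on_image_set_diff[OF P(3), of "edges G" "{f}"] C(4) P(4) inj_on_subset[OF P(3)]
    by auto
  have "iso_by \<phi> \<psi> (collapse G w f) (collapse H (\<phi> w) (\<psi> f))"
    unfolding iso_by_def collapse_def graph.simps
  proof (intro conjI V E ballI)
    fix e assume e: "e \<in> edges G - {f}"
    then have eE: "e \<in> edges G" by simp
    show "src H (\<psi> e) = \<phi> (src G e)" using P(5)[OF eE] .
    show "(if rng H (\<psi> e) = \<phi> w then rng H (\<psi> f) else rng H (\<psi> e)) =
          \<phi> (if rng G e = w then rng G f else rng G e)"
      using P(6)[OF eE] P(6)[OF C(4)] eqv[OF sv(2)[OF eE]] by simp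
  qed
  then show ?thesis using c' by simp
qed

lemma collapse_base0:
  fixes G :: "('v::countable, 'e::countable) graph"
  assumes wf: "wf_graph G" and c: "ccond G w f" and src0: "in_edges G w = {}"
  shows "move_equiv G (collapse G w f)"
proof -
  note C = ccondD[OF c wf]
  have sc: "move_S_cond G w" unfolding move_S_cond_def is_source_def using C(8) src0 by simp
  have rw: "\<And>e. e \<in> edges G \<Longrightarrow> rng G e \<noteq> w" using src0 unfolding in_edges_def by blast
  have Eeq: "edges G - {f} = {e \<in> edges G. src G e \<noteq> w}" using C(5) by blast
  have "iso_by id id (collapse G w f) (move_S G w)"
    unfolding iso_by_def collapse_def move_S_def graph.simps Eeq[symmetric]
    using rw by simp
  then have "graph_iso (collapse G w f) (move_S G w)" using graph_iso_iff by blast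
  moreover have "move_equiv G (move_S G w)" by (rule ME_S[OF wf sc])
  ultimately show ?thesis unfolding move_equiv_def using graph_iso_trans by blast
qed

lemma collapse_base1:
  fixes G :: "('v::countable, 'e::countable) graph"
  assumes wf: "wf_graph G" and c: "ccond G w f" and src1: "src G ` in_edges G w = {s}"
  shows "move_equiv G (collapse G w f)"
proof -
  note C = ccondD[OF c wf]
  have rc: "move_R_cond G w f s" unfolding move_R_cond_def using C(1,2,3,8) src1 by simp
  define \<psi> where "\<psi> e = (if rng G e = w then Inr e else Inl e)" for e
  have inj: "inj_on \<psi> (edges G - {f})" unfolding \<psi>_def inj_on_def by auto
  have img: "\<psi> ` (edges G - {f}) = Inl ` (edges G - in_edges G w - {f}) \<union> Inr ` in_edges G w"
  proof (intro equalityI subsetI)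
    fix x assume "x \<in> \<psi> ` (edges G - {f})"
    then obtain e where e: "e \<in> edges G" "e \<noteq> f" "x = \<psi> e" by blast
    show "x \<in> Inl ` (edges G - in_edges G w - {f}) \<union> Inr ` in_edges G w"
      using e unfolding \<psi>_def in_edges_def by auto
  next
    fix x assume x: "x \<in> Inl ` (edges G - in_edges G w - {f}) \<union> Inr ` in_edges G w"
    have fi: "f \<notin> in_edges G w" using C(3) unfolding in_edges_def by simp
    show "x \<in> \<psi> ` (edges G - {f})"
    proof (cases x)
      case (Inl e) then have "e \<in> edges G - {f}" "rng G e \<noteq> w" using x unfolding in_edges_def by auto
      then show ?thesis using Inl unfolding \<psi>_def by (auto intro!: image_eqI[of _ _ e])
    next
      case (Inr e) then have "e \<in> edges G - {f}" "rng G e = w" using x fi unfolding in_edges_def by auto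
      then show ?thesis using Inr unfolding \<psi>_def by (auto intro!: image_eqI[of _ _ e])
    qed
  qed
  have "iso_by id \<psi> (collapse G w f) (move_R G w f)"
    unfolding iso_by_def collapse_def move_R_def graph.simps
  proof (intro conjI ballI)
    show "bij_betw id (verts G - {w}) (verts G - {w})" by simp
    show "bij_betw \<psi> (edges G - {f}) (Inl ` (edges G - in_edges G w - {f}) \<union> Inr ` in_edges G w)"
      unfolding bij_betw_def using inj img by simp
    fix e assume "e \<in> edges G - {f}"
    show "(case \<psi> e of Inl e \<Rightarrow> src G e | Inr e \<Rightarrow> src G e) = id (src G e)"
      unfolding \<psi>_def by simp
    show "(case \<psi> e of Inl e \<Rightarrow> rng G e | Inr e \<Rightarrow> rng G f) = id (if rng G e = w then rng G f else rng G e)"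
      unfolding \<psi>_def by simp
  qed
  then have "graph_iso (collapse G w f) (move_R G w f)" using graph_iso_iff by blast
  moreover have "move_equiv G (move_R G w f)" by (rule ME_R[OF wf rc])
  ultimately show ?thesis unfolding move_equiv_def using graph_iso_trans by blast
qed



lemma wf_move_I:
  assumes wf: "wf_graph G" and c: "move_I_cond G v k q"
  shows "wf_graph (move_I G v k q)"
proof -
  have img: "q ` in_edges G v = {0..<k}" using c unfolding move_I_cond_def by simp
  have qk: "q e < k" if "e \<in> edges G" "rng G e = v" for e
    using img that unfolding in_edges_def by auto
  have fin: "finite {(w, 0::nat) | w. w \<in> verts G \<and> w \<noteq> v}"
  proof -
    have "{(w, 0::nat) | w. w \<in> verts G \<and> w \<noteq> v} \<subseteq> (\<lambda>w. (w,0)) ` verts G" by auto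
    then show ?thesis using wf unfolding wf_graph_def by (meson finite_imageI finite_subset)
  qed
  have fin2: "finite {(v, i) | i. i < k}"
  proof -
    have "{(v, i) | i. i < k} = Pair v ` {..<k}" by auto
    then show ?thesis by simp
  qed
  show ?thesis unfolding wf_graph_def move_I_def graph.simps
    using fin fin2 wf qk unfolding wf_graph_def by auto
qed

lemma wf_move_O:
  assumes wf: "wf_graph G" and c: "move_O_cond G v k p"
  shows "wf_graph (move_O G v k p)"
proof -
  have img: "p ` out_edges G v = {0..<k}" using c unfolding move_O_cond_def by simp
  have pk: "p e < k" if "e \<in> edges G" "src G e = v" for e
    using img that unfolding out_edges_def by auto
  have fin: "finite {(w, 0::nat) | w. w \<in> verts G \<and> w \<noteq> v}"
  proof -
    have "{(w, 0::nat) | w. w \<in> verts G \<and> w \<noteq> v} \<subseteq> (\<lambda>w. (w,0)) ` verts G" by auto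
    then show ?thesis using wf unfolding wf_graph_def by (meson finite_imageI finite_subset)
  qed
  have fin2: "finite {(v, i) | i. i < k}"
  proof -
    have "{(v, i) | i. i < k} = Pair v ` {..<k}" by auto
    then show ?thesis by simp
  qed
  show ?thesis unfolding wf_graph_def move_O_def graph.simps
    using fin fin2 wf pk unfolding wf_graph_def by auto
qed

lemma wf_move_R:
  assumes wf: "wf_graph G" and c: "move_R_cond G u f v"
  shows "wf_graph (move_R G u f)"
proof -
  have cc: "u \<in> verts G \<and> is_regular G u \<and> out_edges G u = {f} \<and> rng G f \<noteq> u \<and> src G ` in_edges G u = {v}"
    using c unfolding move_R_cond_def .
  then have cw: "ccond G u f" unfolding ccond_def by simp
  note C = ccondD[OF cw wf]
  have s: "src G ` in_edges G u = {v}" using cc by simp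
  have sv: "src G e \<in> verts G" "rng G e \<in> verts G" if "e \<in> edges G" for e
    using wf that unfolding wf_graph_def by auto
  have a: "src G e \<in> verts G - {u} \<and> rng G e \<in> verts G - {u}" if "e \<in> edges G - in_edges G u - {f}" for e
    using that sv C(5) unfolding in_edges_def by auto
  have b: "src G e \<in> verts G - {u}" if "e \<in> in_edges G u" for e
  proof -
    have eE: "e \<in> edges G" "rng G e = u" using that unfolding in_edges_def by auto
    have "src G e \<noteq> u" using C(5)[OF eE(1)] eE(2) C(3) by auto
    then show ?thesis using sv eE by auto
  qed
  have c2: "rng G f \<in> verts G - {u}" using C(3,7) by simp
  show ?thesis unfolding wf_graph_def move_R_def graph.simps
  proof (rule conjI)
    show "finite (verts G - {u})" using wf unfolding wf_graph_def by simp
  next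
    show "\<forall>x\<in>Inl ` (edges G - in_edges G u - {f}) \<union> Inr ` in_edges G u.
          (case x of Inl e \<Rightarrow> src G e | Inr e \<Rightarrow> src G e) \<in> verts G - {u} \<and>
          (case x of Inl e \<Rightarrow> rng G e | Inr e \<Rightarrow> rng G f) \<in> verts G - {u}"
    proof
      fix x assume x: "x \<in> Inl ` (edges G - in_edges G u - {f}) \<union> Inr ` in_edges G u"
      then show "(case x of Inl e \<Rightarrow> src G e | Inr e \<Rightarrow> src G e) \<in> verts G - {u} \<and>
          (case x of Inl e \<Rightarrow> rng G e | Inr e \<Rightarrow> rng G f) \<in> verts G - {u}"
      proof (elim UnE imageE)
        fix e assume "e \<in> edges G - in_edges G u - {f}" "x = Inl e"
        then show ?thesis using a by simp
      next
        fix e assume "e \<in> in_edges G u" "x = Inr e"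
        then show ?thesis using b c2 by simp
      qed
    qed
  qed
qed

lemma iso_card_src:
  assumes iso: "iso_by \<phi> \<psi> G H" and wf: "wf_graph G" and vG: "v \<in> verts G"
  shows "card (src H ` in_edges H (\<phi> v)) = card (src G ` in_edges G v)"
proof -
  note P = iso_parts[OF iso]
  have "src H ` in_edges H (\<phi> v) = (\<lambda>e. src H (\<psi> e)) ` in_edges G v"
    unfolding iso_in_edges[OF iso wf vG] image_image ..
  also have "\<dots> = (\<lambda>e. \<phi> (src G e)) ` in_edges G v"
    by (rule image_cong) (auto simp: in_edges_def P(5))
  also have "\<dots> = \<phi> ` (src G ` in_edges G v)" by (simp add: image_image)
  finally have eq: "src H ` in_edges H (\<phi> v) = \<phi> ` (src G ` in_edges G v)" .
  have "src G ` in_edges G v \<subseteq> verts G" using wf unfolding wf_graph_def in_edges_def by auto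
  then have "inj_on \<phi> (src G ` in_edges G v)" using P(1) inj_on_subset by blast
  then show ?thesis unfolding eq by (rule card_image)
qed



locale cstep =
  fixes G :: "('v, 'e) graph" and w :: 'v and f :: 'e and s :: 'v and s' :: 'v
  assumes wf: "wf_graph G" and c: "ccond G w f"
    and sS: "s \<in> src G ` in_edges G w" and s'S: "s' \<in> src G ` in_edges G w" and ss: "s' \<noteq> s"
begin

definition "q e = (if src G e = s then 0 else 1::nat)"
definition "G1 = move_I G w 2 q"
definition "A = {e \<in> edges G. rng G e = w \<and> src G e = s}"
definition "G2 = move_R G1 (w, 0) (f, 0)"

lemmas C = ccondD[OF c wf]

lemma sv: "e \<in> edges G \<Longrightarrow> src G e \<in> verts G" "e \<in> edges G \<Longrightarrow> rng G e \<in> verts G"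
  using wf unfolding wf_graph_def by auto

lemma s_ne_w: "s \<noteq> w"
proof
  assume "s = w"
  obtain e0 where e0: "e0 \<in> in_edges G w" "src G e0 = s" using sS by blast
  have "e0 \<in> edges G" "rng G e0 = w" using e0 unfolding in_edges_def by auto
  then show False using C(5) e0(2) \<open>s = w\<close> C(3) by auto
qed

lemma I_cond: "move_I_cond G w 2 q"
proof -
  obtain e0 where e0: "e0 \<in> in_edges G w" "src G e0 = s" using sS by blast
  obtain e1 where e1: "e1 \<in> in_edges G w" "src G e1 = s'" using s'S by blast
  have "q ` in_edges G w = {0..<2}"
  proof (intro equalityI subsetI)
    fix x assume "x \<in> q ` in_edges G w" then show "x \<in> {0..<2}" unfolding q_def by auto
  next
    fix x :: nat assume "x \<in> {0..<2}"
    then have "x = 0 \<or> x = 1" by auto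
    then show "x \<in> q ` in_edges G w"
    proof
      assume "x = 0" then show ?thesis using e0 unfolding q_def by (auto intro!: image_eqI[of _ _ e0])
    next
      assume "x = 1" then show ?thesis using e1 ss unfolding q_def by (auto intro!: image_eqI[of _ _ e1])
    qed
  qed
  moreover have "\<not> is_source G w" using e0 unfolding is_source_def by blast
  ultimately show ?thesis unfolding move_I_cond_def using C(8) by simp
qed

lemma E1: "edges G1 = (\<lambda>e. (e, 0)) ` edges G \<union> {(f, 1)}"
  unfolding G1_def move_I_def graph.simps
proof (intro equalityI subsetI)
  fix x :: "'e \<times> nat" assume "x \<in> {(e, 0) |e. e \<in> edges G \<and> src G e \<noteq> w} \<union> {(e, i) |e i. e \<in> edges G \<and> src G e = w \<and> i < 2}"
  then show "x \<in> (\<lambda>e. (e, 0)) ` edges G \<union> {(f, 1)}"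
  proof (elim UnE)
    assume "x \<in> {(e, 0) |e. e \<in> edges G \<and> src G e \<noteq> w}" then show ?thesis by auto
  next
    assume "x \<in> {(e, i) |e i. e \<in> edges G \<and> src G e = w \<and> i < 2}"
    then obtain e and i :: nat where "x = (e, i)" "e \<in> edges G" "e = f" "i < 2" using C(5) by blast
    then show ?thesis by (cases i) auto
  qed
next
  fix x :: "'e \<times> nat" assume "x \<in> (\<lambda>e. (e, 0)) ` edges G \<union> {(f, 1)}"
  then show "x \<in> {(e, 0) |e. e \<in> edges G \<and> src G e \<noteq> w} \<union> {(e, i) |e i. e \<in> edges G \<and> src G e = w \<and> i < 2}"
  proof (elim UnE)
    assume "x \<in> (\<lambda>e. (e, 0)) ` edges G"
    then obtain e where "x = (e, 0)" "e \<in> edges G" by blast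
    then show ?thesis using C(5) by (cases "src G e = w") auto
  next
    assume "x \<in> {(f, 1)}" then show ?thesis using C(4,6) by auto
  qed
qed

lemma V1: "verts G1 = (\<lambda>x. (x, 0)) ` verts G \<union> {(w, 1)}"
  unfolding G1_def move_I_def graph.simps
proof (intro equalityI subsetI)
  fix x :: "'v \<times> nat" assume "x \<in> {(w', 0) |w'. w' \<in> verts G \<and> w' \<noteq> w} \<union> {(w, i) |i. i < 2}"
  then show "x \<in> (\<lambda>x. (x, 0)) ` verts G \<union> {(w, 1)}"
  proof (elim UnE)
    assume "x \<in> {(w', 0) |w'. w' \<in> verts G \<and> w' \<noteq> w}" then show ?thesis by auto
  next
    assume "x \<in> {(w, i) |i. i < 2}"
    then obtain i :: nat where "x = (w, i)" "i < 2" by blast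
    then show ?thesis using C(1) by (cases i) auto
  qed
next
  fix x :: "'v \<times> nat" assume "x \<in> (\<lambda>x. (x, 0)) ` verts G \<union> {(w, 1)}"
  then show "x \<in> {(w', 0) |w'. w' \<in> verts G \<and> w' \<noteq> w} \<union> {(w, i) |i. i < 2}"
    by auto
qed

lemma src1: "src G1 (e, 0) = (src G e, 0)"
  unfolding G1_def move_I_def by simp
lemma src1f: "src G1 (f, 1) = (w, 1)"
  unfolding G1_def move_I_def using C(6) by simp
lemma rng1: "rng G1 (e, i) = (if rng G e = w then (w, q e) else (rng G e, 0))"
  unfolding G1_def move_I_def by simp

lemma fA: "f \<notin> A" unfolding A_def using C(3) by simp

lemma in1: "in_edges G1 (w, 0) = (\<lambda>e. (e, 0)) ` A"
proof (intro equalityI subsetI)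
  fix x :: "'e \<times> nat" assume "x \<in> in_edges G1 (w, 0)"
  then have x: "x \<in> (\<lambda>e. (e, 0)) ` edges G \<union> {(f, 1)}" "rng G1 x = (w, 0)" unfolding in_edges_def E1 by auto
  from x(1) show "x \<in> (\<lambda>e. (e, 0)) ` A"
  proof (elim UnE)
    assume "x \<in> (\<lambda>e. (e, 0)) ` edges G"
    then obtain e where e: "x = (e, 0)" "e \<in> edges G" by blast
    then have "rng G e = w \<and> src G e = s" using x(2) by (auto simp: rng1 q_def split: if_splits)
    then show ?thesis using e unfolding A_def by auto
  next
    assume "x \<in> {(f, 1)}" then show ?thesis using x(2) C(3) by (auto simp: rng1)
  qed
next
  fix x :: "'e \<times> nat" assume "x \<in> (\<lambda>e. (e, 0)) ` A"
  then obtain e where e: "x = (e, 0)" "e \<in> A" by blast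
  have r: "rng G1 (e, 0) = (w, 0)" using e by (simp add: rng1 A_def q_def)
  then show "x \<in> in_edges G1 (w, 0)" using e unfolding in_edges_def E1 A_def by auto
qed

lemma out1: "out_edges G1 (w, 0) = {(f, 0)}"
proof (intro equalityI subsetI)
  fix x :: "'e \<times> nat" assume "x \<in> out_edges G1 (w, 0)"
  then have x: "x \<in> (\<lambda>e. (e, 0)) ` edges G \<union> {(f, 1)}" "src G1 x = (w, 0)" unfolding out_edges_def E1 by auto
  from x(1) show "x \<in> {(f, 0)}"
  proof (elim UnE)
    assume "x \<in> (\<lambda>e. (e, 0)) ` edges G"
    then obtain e where e: "x = (e, 0)" "e \<in> edges G" by blast
    then have "src G e = w" using x(2) by (simp add: src1)
    then show ?thesis using e C(5) by simp
  next
    assume "x \<in> {(f, 1)}" then show ?thesis using x(2) src1f by auto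
  qed
next
  fix x :: "'e \<times> nat" assume "x \<in> {(f, 0)}"
  have r: "src G1 (f, 0) = (w, 0)" by (simp add: src1 C(6))
  then show "x \<in> out_edges G1 (w, 0)" unfolding out_edges_def E1 using C(4) \<open>x \<in> {(f, 0)}\<close> by auto
qed

lemma A_ne: "A \<noteq> {}"
proof -
  obtain e0 where e0: "e0 \<in> in_edges G w" "src G e0 = s" using sS by blast
  then show ?thesis unfolding A_def in_edges_def by auto
qed

lemma R_cond: "move_R_cond G1 (w, 0) (f, 0) (s, 0)"
proof -
  have v: "(w, 0) \<in> verts G1" unfolding V1 using C(1) by auto
  have reg: "is_regular G1 (w, 0)" unfolding is_regular_def is_sink_def is_inf_emitter_def out1 using v by simp
  have r: "rng G1 (f, 0) \<noteq> (w, 0)" unfolding rng1 using C(3) by simp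
  have "src G1 ` in_edges G1 (w, 0) = (\<lambda>e. (src G e, 0)) ` A" unfolding in1 image_image src1 ..
  also have "\<dots> = (\<lambda>e. (s, 0)) ` A" by (rule image_cong) (auto simp: A_def)
  also have "\<dots> = {(s, 0)}" using A_ne by auto
  finally show ?thesis unfolding move_R_cond_def using v reg out1 r by simp
qed

lemma wfG1: "wf_graph G1" unfolding G1_def by (rule wf_move_I[OF wf I_cond])
lemma wfG2: "wf_graph G2" unfolding G2_def by (rule wf_move_R[OF wfG1 R_cond])

lemma E2: "edges G2 = Inl ` ((\<lambda>e. (e, 0)) ` (edges G - A - {f}) \<union> {(f, 1)}) \<union> Inr ` ((\<lambda>e. (e, 0)) ` A)"
proof -
  have "edges G1 - in_edges G1 (w, 0) - {(f, 0)} = (\<lambda>e. (e, 0)) ` (edges G - A - {f}) \<union> {(f, 1)}"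
    unfolding E1 in1 by auto
  then show ?thesis unfolding G2_def move_R_def graph.simps in1 by simp
qed

lemma V2: "verts G2 = (\<lambda>x. (x, 0)) ` (verts G - {w}) \<union> {(w, 1)}"
  unfolding G2_def move_R_def graph.simps V1 by auto

lemma src2: "src G2 x = (case x of Inl e \<Rightarrow> src G1 e | Inr e \<Rightarrow> src G1 e)"
  unfolding G2_def move_R_def by simp
lemma rng2: "rng G2 x = (case x of Inl e \<Rightarrow> rng G1 e | Inr e \<Rightarrow> rng G1 (f, 0))"
  unfolding G2_def move_R_def by simp

lemma A_sub: "A \<subseteq> edges G" unfolding A_def by auto

lemma ccond2: "ccond G2 (w, 1) (Inl (f, 1))"
proof -
  have v: "(w, 1) \<in> verts G2" unfolding V2 by simp
  have "out_edges G2 (w, 1) = {Inl (f, 1)}"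
  proof (intro equalityI subsetI)
    fix x :: "('e \<times> nat) + ('e \<times> nat)" assume "x \<in> out_edges G2 (w, 1)"
    then have x: "x \<in> edges G2" "src G2 x = (w, 1)" unfolding out_edges_def by auto
    from x(1) show "x \<in> {Inl (f, 1)}" unfolding E2
    proof (elim UnE imageE)
      fix y e assume "y = (e, 0)" "x = Inl y" then show ?thesis using x(2) by (simp add: src2 src1)
    next
      fix y assume "y \<in> {(f, 1::nat)}" "x = Inl y" then show ?thesis by simp
    next
      fix y e assume "y = (e, 0)" "x = Inr y" then show ?thesis using x(2) by (simp add: src2 src1)
    qed
  next
    fix x :: "('e \<times> nat) + ('e \<times> nat)" assume "x \<in> {Inl (f, 1)}"
    then show "x \<in> out_edges G2 (w, 1)" unfolding out_edges_def E2 src2 using src1f by auto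
  qed
  moreover have "rng G2 (Inl (f, 1)) \<noteq> (w, 1)" using C(3) by (simp add: rng2 rng1)
  ultimately show ?thesis unfolding ccond_def using v by simp
qed

lemma in2: "in_edges G2 (w, 1) = Inl ` (\<lambda>e. (e, 0)) ` {e \<in> edges G. rng G e = w \<and> src G e \<noteq> s}"
proof (intro equalityI subsetI)
  fix x :: "('e \<times> nat) + ('e \<times> nat)" assume "x \<in> in_edges G2 (w, 1)"
  then have x: "x \<in> edges G2" "rng G2 x = (w, 1)" unfolding in_edges_def by auto
  from x(1) show "x \<in> Inl ` (\<lambda>e. (e, 0)) ` {e \<in> edges G. rng G e = w \<and> src G e \<noteq> s}" unfolding E2
  proof (elim UnE imageE)
    fix y e assume y: "y = (e, 0)" "x = Inl y" "e \<in> edges G - A - {f}"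
    then have "rng G e = w \<and> q e = 1" using x(2) by (auto simp: rng2 rng1 split: if_splits)
    then show ?thesis using y unfolding q_def by (auto split: if_splits)
  next
    fix y assume "y \<in> {(f, 1::nat)}" "x = Inl y" then show ?thesis using x(2) C(3) by (simp add: rng2 rng1)
  next
    fix y e assume "y = (e, 0)" "x = Inr y" then show ?thesis using x(2) C(3) by (simp add: rng2 rng1)
  qed
next
  fix x :: "('e \<times> nat) + ('e \<times> nat)" assume "x \<in> Inl ` (\<lambda>e. (e, 0)) ` {e \<in> edges G. rng G e = w \<and> src G e \<noteq> s}"
  then obtain e where e: "x = Inl (e, 0)" "e \<in> edges G" "rng G e = w" "src G e \<noteq> s" by blast
  have "e \<notin> A" "e \<noteq> f" using e C(3) unfolding A_def by auto
  then have "x \<in> edges G2" unfolding E2 using e by auto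
  moreover have "rng G2 x = (w, 1)" using e by (simp add: rng2 rng1 q_def)
  ultimately show "x \<in> in_edges G2 (w, 1)" unfolding in_edges_def by simp
qed

lemma card2: "card (src G2 ` in_edges G2 (w, 1)) < card (src G ` in_edges G w)"
proof -
  let ?S = "src G ` in_edges G w"
  have "src G2 ` in_edges G2 (w, 1) = (\<lambda>e. (src G e, 0::nat)) ` {e \<in> edges G. rng G e = w \<and> src G e \<noteq> s}"
    unfolding in2 image_image by (simp add: src2 src1)
  also have "\<dots> = (\<lambda>x. (x, 0)) ` (?S - {s})"
    unfolding in_edges_def by auto
  finally have eq: "src G2 ` in_edges G2 (w, 1) = (\<lambda>x. (x, 0::nat)) ` (?S - {s})" .
  have fin: "finite ?S"
  proof -
    have "?S \<subseteq> verts G" using sv unfolding in_edges_def by auto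
    then show ?thesis using wf unfolding wf_graph_def by (meson finite_subset)
  qed
  have "card ((\<lambda>x. (x, 0::nat)) ` (?S - {s})) = card (?S - {s})" by (rule card_image) (auto simp: inj_on_def)
  also have "\<dots> < card ?S" using fin sS by (meson card_Diff1_less)
  finally show ?thesis unfolding eq .
qed

definition "\<psi> e = (if e \<in> A then Inr (e, 0::nat) else Inl (e, 0::nat))"

lemma final_iso: "iso_by (\<lambda>x. (x, 0)) \<psi> (collapse G w f) (collapse G2 (w, 1) (Inl (f, 1)))"
  unfolding iso_by_def
proof (intro conjI)
  show "bij_betw (\<lambda>x. (x, 0::nat)) (verts (collapse G w f)) (verts (collapse G2 (w, 1) (Inl (f, 1))))"
    unfolding collapse_def graph.simps V2 bij_betw_def by (auto simp: inj_on_def)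
  have "edges (collapse G2 (w, 1) (Inl (f, 1))) = Inl ` (\<lambda>e. (e, 0)) ` (edges G - A - {f}) \<union> Inr ` (\<lambda>e. (e, 0)) ` A"
    unfolding collapse_def graph.simps E2 by auto
  moreover have "\<psi> ` (edges G - {f}) = Inl ` (\<lambda>e. (e, 0)) ` (edges G - A - {f}) \<union> Inr ` (\<lambda>e. (e, 0)) ` A"
  proof (intro equalityI subsetI)
    fix x :: "('e \<times> nat) + ('e \<times> nat)" assume "x \<in> \<psi> ` (edges G - {f})" then show "x \<in> Inl ` (\<lambda>e. (e, 0)) ` (edges G - A - {f}) \<union> Inr ` (\<lambda>e. (e, 0)) ` A"
      unfolding \<psi>_def by auto
  next
    fix x :: "('e \<times> nat) + ('e \<times> nat)" assume "x \<in> Inl ` (\<lambda>e. (e, 0)) ` (edges G - A - {f}) \<union> Inr ` (\<lambda>e. (e, 0)) ` A"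
    then show "x \<in> \<psi> ` (edges G - {f})"
    proof (elim UnE imageE)
      fix y e assume "e \<in> edges G - A - {f}" "y = (e, 0)" "x = Inl y"
      then show ?thesis unfolding \<psi>_def by (auto intro!: image_eqI[of _ _ e])
    next
      fix y e assume "e \<in> A" "y = (e, 0)" "x = Inr y"
      then show ?thesis using fA A_sub unfolding \<psi>_def by (auto intro!: image_eqI[of _ _ e])
    qed
  qed
  moreover have "inj_on \<psi> (edges G - {f})" unfolding \<psi>_def inj_on_def by auto
  ultimately show "bij_betw \<psi> (edges (collapse G w f)) (edges (collapse G2 (w, 1) (Inl (f, 1))))"
    unfolding bij_betw_def collapse_def graph.simps by simp
  show "\<forall>e\<in>edges (collapse G w f).
       src (collapse G2 (w, 1) (Inl (f, 1))) (\<psi> e) = (src (collapse G w f) e, 0) \<and>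
       rng (collapse G2 (w, 1) (Inl (f, 1))) (\<psi> e) = (rng (collapse G w f) e, 0)"
  proof
    fix e assume "e \<in> edges (collapse G w f)"
    then have e: "e \<in> edges G" "e \<noteq> f" unfolding collapse_def by auto
    show "src (collapse G2 (w, 1) (Inl (f, 1))) (\<psi> e) = (src (collapse G w f) e, 0) \<and>
       rng (collapse G2 (w, 1) (Inl (f, 1))) (\<psi> e) = (rng (collapse G w f) e, 0)"
    proof (cases "e \<in> A")
      case True
      then have "rng G e = w" unfolding A_def by simp
      then show ?thesis using True C(3) unfolding \<psi>_def collapse_def graph.simps by (simp add: src2 rng2 src1 rng1 A_def)
    next
      case False
      then have "rng G e = w \<Longrightarrow> src G e \<noteq> s" using e unfolding A_def by auto
      then show ?thesis using False C(3) unfolding \<psi>_def collapse_def graph.simps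
        by (simp add: src2 rng2 src1 rng1 q_def)
    qed
  qed
qed

end



theorem collapse_nat:
  fixes G :: ngraph
  assumes "wf_graph G" "ccond G w f"
  shows "move_equiv G (collapse G w f)"
  using assms
proof (induction "card (src G ` in_edges G w)" arbitrary: G w f rule: less_induct)
  case less
  note wf = less.prems(1) and c = less.prems(2)
  show ?case
  proof (cases "src G ` in_edges G w = {}")
    case True
    then have "in_edges G w = {}" by simp
    then show ?thesis by (rule collapse_base0[OF wf c])
  next
    case False
    then obtain s where sS: "s \<in> src G ` in_edges G w" by blast
    show ?thesis
    proof (cases "src G ` in_edges G w = {s}")
      case True
      then show ?thesis by (rule collapse_base1[OF wf c])
    next
      case False
      then obtain s' where s'S: "s' \<in> src G ` in_edges G w" and ss: "s' \<noteq> s" using sS by blast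
      interpret cs: cstep G w f s s'
        by unfold_locales (rule wf, rule c, rule sS, rule s'S, rule ss)
      let ?G2 = "cs.G2"
      let ?G3 = "enc ?G2"
      have v2: "(w, 1::nat) \<in> verts ?G2" unfolding cs.V2 by simp
      note CI = collapse_iso[OF iso_by_enc cs.wfG2 cs.ccond2]
      have c3: "ccond ?G3 (to_nat (w, 1::nat)) (to_nat (Inl (f, 1::nat) :: (nat \<times> nat) + (nat \<times> nat)))"
        using CI by simp
      have wf3: "wf_graph ?G3" by (rule wf_enc[OF cs.wfG2])
      have card3: "card (src ?G3 ` in_edges ?G3 (to_nat (w, 1::nat))) < card (src G ` in_edges G w)"
        using iso_card_src[OF iso_by_enc cs.wfG2 v2] cs.card2 by simp
      have m3: "move_equiv ?G3 (collapse ?G3 (to_nat (w, 1::nat)) (to_nat (Inl (f, 1::nat) :: (nat \<times> nat) + (nat \<times> nat))))"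
        by (rule less.hyps[OF card3 wf3 c3])
      have m2: "move_equiv ?G2 (collapse ?G3 (to_nat (w, 1::nat)) (to_nat (Inl (f, 1::nat) :: (nat \<times> nat) + (nat \<times> nat))))"
        by (rule ME_iso_left[OF graph_iso_enc m3])
      have wfc2: "wf_graph (collapse ?G2 (w, 1) (Inl (f, 1)))" by (rule wf_collapse[OF cs.wfG2 cs.ccond2])
      have wfc3: "wf_graph (collapse ?G3 (to_nat (w, 1::nat)) (to_nat (Inl (f, 1::nat) :: (nat \<times> nat) + (nat \<times> nat))))"
        by (rule wf_collapse[OF wf3 c3])
      have i23: "graph_iso (collapse ?G3 (to_nat (w, 1::nat)) (to_nat (Inl (f, 1::nat) :: (nat \<times> nat) + (nat \<times> nat))))
          (collapse ?G2 (w, 1) (Inl (f, 1)))"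
        using graph_iso_sym[OF _ wfc2] CI graph_iso_iff by blast
      have m2': "move_equiv ?G2 (collapse ?G2 (w, 1) (Inl (f, 1)))"
        by (rule ME_iso_right[OF m2 i23 wfc3])
      have wfc: "wf_graph (collapse G w f)" by (rule wf_collapse[OF wf c])
      have i2: "graph_iso (collapse ?G2 (w, 1) (Inl (f, 1))) (collapse G w f)"
        using graph_iso_sym[OF _ wfc] cs.final_iso graph_iso_iff by blast
      have m2'': "move_equiv ?G2 (collapse G w f)" by (rule ME_iso_right[OF m2' i2 wfc2])
      have m1: "move_equiv G cs.G1" unfolding cs.G1_def by (rule ME_I[OF wf cs.I_cond])
      have m12: "move_equiv cs.G1 ?G2" unfolding cs.G2_def by (rule ME_R[OF cs.wfG1 cs.R_cond])
      have g1: "good cs.G1" unfolding good_def using cs.wfG1 cs.E1 by auto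
      have g2: "good ?G2" unfolding good_def using cs.wfG2 cs.E2 by auto
      have "move_equiv G ?G2" by (rule ME_trans[OF m1 m12 g1])
      then show ?thesis by (rule ME_trans[OF _ m2'' g2])
    qed
  qed
qed

theorem collapse_ME:
  fixes G :: "('v::countable, 'e::countable) graph"
  assumes wf: "wf_graph G" and c: "ccond G w f"
  shows "move_equiv G (collapse G w f)"
proof -
  note CI = collapse_iso[OF iso_by_enc wf c]
  have c': "ccond (enc G) (to_nat w) (to_nat f)" using CI by simp
  have m: "move_equiv (enc G) (collapse (enc G) (to_nat w) (to_nat f))"
    by (rule collapse_nat[OF wf_enc[OF wf] c'])
  have m': "move_equiv G (collapse (enc G) (to_nat w) (to_nat f))" by (rule ME_iso_left[OF graph_iso_enc m])
  have wfc: "wf_graph (collapse G w f)" by (rule wf_collapse[OF wf c])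
  have "graph_iso (collapse (enc G) (to_nat w) (to_nat f)) (collapse G w f)"
    using graph_iso_sym[OF _ wfc] CI graph_iso_iff by blast
  then show ?thesis by (rule ME_iso_right[OF m' _ wf_collapse[OF wf_enc[OF wf] c']])
qed



definition ecard :: "'a set \<Rightarrow> enat" where
  "ecard S = (if finite S then enat (card S) else \<infinity>)"

definition pe :: "('v, 'e) graph \<Rightarrow> 'v \<Rightarrow> 'v \<Rightarrow> 'e set" where
  "pe G x y = {e \<in> edges G. src G e = x \<and> rng G e = y}"

lemma bij_of_ecard:
  assumes "countable A" "countable B" "ecard A = ecard B"
  shows "\<exists>b. bij_betw b A B"
proof (cases "finite A")
  case True
  then have "finite B" "card A = card B" using assms(3) unfolding ecard_def by (auto split: if_splits)
  then show ?thesis using True finite_same_card_bij by blast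
next
  case False
  then have "infinite B" using assms(3) unfolding ecard_def by (auto split: if_splits)
  obtain a :: "_ \<Rightarrow> nat" where a: "bij_betw a A UNIV" using countableE_infinite[OF assms(1) False] by blast
  obtain b :: "_ \<Rightarrow> nat" where b: "bij_betw b B UNIV" using countableE_infinite[OF assms(2) \<open>infinite B\<close>] by blast
  have "bij_betw (inv_into B b \<circ> a) A B" by (rule bij_betw_trans[OF a bij_betw_inv_into[OF b]])
  then show ?thesis by blast
qed

lemma iso_by_counts:
  fixes G :: "('v1, 'e1::countable) graph" and H :: "('v2, 'e2::countable) graph"
  assumes wfG: "wf_graph G" and wfH: "wf_graph H" and bij: "bij_betw \<phi> (verts G) (verts H)"
    and cnt: "\<And>x y. x \<in> verts G \<Longrightarrow> y \<in> verts G \<Longrightarrow> ecard (pe G x y) = ecard (pe H (\<phi> x) (\<phi> y))"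
  shows "graph_iso G H"
proof -
  have "\<exists>b. bij_betw b (pe G x y) (pe H (\<phi> x) (\<phi> y))" if "x \<in> verts G" "y \<in> verts G" for x y
    by (rule bij_of_ecard) (auto simp: cnt[OF that])
  then obtain B where B: "\<And>x y. x \<in> verts G \<Longrightarrow> y \<in> verts G \<Longrightarrow> bij_betw (B x y) (pe G x y) (pe H (\<phi> x) (\<phi> y))"
    by metis
  define \<psi> where "\<psi> e = B (src G e) (rng G e) e" for e
  have sv: "src G e \<in> verts G" "rng G e \<in> verts G" if "e \<in> edges G" for e
    using wfG that unfolding wf_graph_def by auto
  have epe: "e \<in> pe G (src G e) (rng G e)" if "e \<in> edges G" for e using that unfolding pe_def by simp
  have psi_pe: "\<psi> e \<in> pe H (\<phi> (src G e)) (\<phi> (rng G e))" if "e \<in> edges G" for e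
    using B[OF sv[OF that]] epe[OF that] unfolding \<psi>_def bij_betw_def by blast
  then have psi_E: "\<psi> e \<in> edges H" "src H (\<psi> e) = \<phi> (src G e)" "rng H (\<psi> e) = \<phi> (rng G e)"
    if "e \<in> edges G" for e using that unfolding pe_def by auto
  have injphi: "inj_on \<phi> (verts G)" using bij unfolding bij_betw_def by simp
  have inj: "inj_on \<psi> (edges G)"
  proof (rule inj_onI)
    fix e1 e2 assume e: "e1 \<in> edges G" "e2 \<in> edges G" "\<psi> e1 = \<psi> e2"
    have "\<phi> (src G e1) = \<phi> (src G e2)" "\<phi> (rng G e1) = \<phi> (rng G e2)"
      using psi_E[OF e(1)] psi_E[OF e(2)] e(3) by metis+
    then have st: "src G e1 = src G e2" "rng G e1 = rng G e2"
      using inj_onD[OF injphi] sv e by blast+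
    have "inj_on (B (src G e1) (rng G e1)) (pe G (src G e1) (rng G e1))"
      using B[OF sv[OF e(1)]] unfolding bij_betw_def by simp
    moreover have "e2 \<in> pe G (src G e1) (rng G e1)" using epe[OF e(2)] st by simp
    ultimately show "e1 = e2" using e(3) epe[OF e(1)] st unfolding \<psi>_def by (metis inj_onD)
  qed
  have surj: "\<psi> ` edges G = edges H"
  proof (intro equalityI subsetI)
    fix x assume "x \<in> \<psi> ` edges G" then show "x \<in> edges H" using psi_E by auto
  next
    fix e' assume e': "e' \<in> edges H"
    have "src H e' \<in> verts H" "rng H e' \<in> verts H" using wfH e' unfolding wf_graph_def by auto
    then obtain x y where xy: "x \<in> verts G" "y \<in> verts G" "src H e' = \<phi> x" "rng H e' = \<phi> y"
      using bij unfolding bij_betw_def by (metis imageE)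
    have "e' \<in> pe H (\<phi> x) (\<phi> y)" using e' xy unfolding pe_def by simp
    moreover have "B x y ` pe G x y = pe H (\<phi> x) (\<phi> y)" using B[OF xy(1,2)] unfolding bij_betw_def by simp
    ultimately have "e' \<in> B x y ` pe G x y" by simp
    then obtain e where e: "e \<in> pe G x y" "e' = B x y e" by (rule imageE)
    then have ee: "e \<in> edges G" "src G e = x" "rng G e = y" unfolding pe_def by auto
    have "e' = \<psi> e" unfolding \<psi>_def ee(2,3) e(2) ..
    then show "e' \<in> \<psi> ` edges G" using ee(1) by (rule image_eqI)
  qed
  have "iso_by \<phi> \<psi> G H" unfolding iso_by_def using bij inj surj psi_E by (simp add: bij_betw_def)
  then show ?thesis using graph_iso_iff by blast
qed

lemma ecard_image: "inj_on f A \<Longrightarrow> ecard (f ` A) = ecard A"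
  unfolding ecard_def by (simp add: card_image finite_image_iff)

lemma ecard_Un: "A \<inter> B = {} \<Longrightarrow> ecard (A \<union> B) = ecard A + ecard B"
  unfolding ecard_def by (simp add: card_Un_disjoint)

lemma ecard_Diff1: "x \<in> A \<Longrightarrow> ecard (A - {x}) = ecard A - 1"
  unfolding ecard_def by (auto simp: one_enat_def)

lemma ecard_lt: "ecard {k. enat k < a} = a"
proof (cases a)
  case (enat m)
  have "{k. enat k < a} = {..<m}" using enat by auto
  then show ?thesis unfolding ecard_def using enat by simp
next
  case infinity
  then have "{k. enat k < a} = UNIV" by auto
  then show ?thesis unfolding ecard_def using infinity by simp
qed

lemma wf_gom: "wf_graph (graph_of_mat n A)"
  unfolding wf_graph_def graph_of_mat_def by auto

lemma pe_gom: "pe (graph_of_mat n A) x y = (if x < n \<and> y < n then (\<lambda>k. (x, y, k)) ` {k. enat k < A x y} else {})"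
  unfolding pe_def graph_of_mat_def by auto

lemma ecard_pe_gom: "x < n \<Longrightarrow> y < n \<Longrightarrow> ecard (pe (graph_of_mat n A) x y) = A x y"
  unfolding pe_gom by (simp add: ecard_image inj_on_def ecard_lt)



lemma gom_simps: "verts (graph_of_mat n A) = {0..<n}"
  "edges (graph_of_mat n A) = {(x, y, k). x < n \<and> y < n \<and> enat k < A x y}"
  "src (graph_of_mat n A) = (\<lambda>(x, y, k). x)" "rng (graph_of_mat n A) = (\<lambda>(x, y, k). y)"
  unfolding graph_of_mat_def by simp_all

lemma CA:
  fixes A :: "nat \<Rightarrow> nat \<Rightarrow> enat" and n u v :: nat
  assumes un: "u < n" and vn: "v < n" and uv: "u \<noteq> v" and Auv: "0 < A u v" and Auu: "0 < A u u"
  shows "move_equiv (graph_of_mat n A)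
     (graph_of_mat n (\<lambda>x y. if y = v then (A x v - (if x = u then 1 else 0)) + A x u else A x y))"
proof -
  define G where "G = graph_of_mat n A"
  define A' where "A' = (\<lambda>x y. if y = v then (A x v - (if x = u then 1 else 0)) + A x u else A x y)"
  define e0 where "e0 = (u, v, 0::nat)"
  define e1 where "e1 = (u, u, 0::nat)"
  define p where "p e = (if e = e0 then 0 else 1::nat)" for e
  have wfG: "wf_graph G" unfolding G_def by (rule wf_gom)
  have e0E: "e0 \<in> edges G" unfolding G_def e0_def gom_simps using un vn Auv by (simp add: zero_enat_def)
  have e1E: "e1 \<in> edges G" unfolding G_def e1_def gom_simps using un Auu by (simp add: zero_enat_def)
  have se0: "src G e0 = u" "rng G e0 = v" unfolding G_def e0_def gom_simps by simp_all
  have se1: "src G e1 = u" "rng G e1 = u" unfolding G_def e1_def gom_simps by simp_all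
  have e01: "e1 \<noteq> e0" unfolding e0_def e1_def using uv by simp
  have uV: "u \<in> verts G" unfolding G_def gom_simps using un by simp
  have e0o: "e0 \<in> out_edges G u" using e0E se0 unfolding out_edges_def by simp
  have e1o: "e1 \<in> out_edges G u" using e1E se1 unfolding out_edges_def by simp
  have Oc: "move_O_cond G u 2 p"
  proof -
    have ns: "\<not> is_sink G u" using e0o unfolding is_sink_def by blast
    have img: "p ` out_edges G u = {0..<2}"
    proof (intro equalityI subsetI)
      fix x assume "x \<in> p ` out_edges G u" then show "x \<in> {0..<2}" unfolding p_def by auto
    next
      fix x :: nat assume "x \<in> {0..<2}"
      then have "x = 0 \<or> x = 1" by auto
      then show "x \<in> p ` out_edges G u"
      proof
        assume "x = 0" then show ?thesis using e0o unfolding p_def by (auto intro!: image_eqI[of _ _ e0])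
      next
        assume "x = 1" then show ?thesis using e1o e01 unfolding p_def by (auto intro!: image_eqI[of _ _ e1])
      qed
    qed
    have fin0: "finite {e \<in> out_edges G u. p e = 0}"
    proof -
      have "{e \<in> out_edges G u. p e = 0} \<subseteq> {e0}" unfolding p_def by (auto split: if_splits)
      then show ?thesis by (rule finite_subset) simp
    qed
    have inf: "\<forall>i<2. \<forall>j<2. infinite {e \<in> out_edges G u. p e = i} \<and> infinite {e \<in> out_edges G u. p e = j} \<longrightarrow> i = j"
    proof (intro allI impI)
      fix i j :: nat assume "i < 2" "j < 2" and h: "infinite {e \<in> out_edges G u. p e = i} \<and> infinite {e \<in> out_edges G u. p e = j}"
      then have "i \<noteq> 0" "j \<noteq> 0" using fin0 by auto
      then show "i = j" using \<open>i < 2\<close> \<open>j < 2\<close> by simp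
    qed
    show ?thesis unfolding move_O_cond_def using uV ns img inf by simp
  qed
  define G1 where "G1 = move_O G u 2 p"
  have wfG1: "wf_graph G1" unfolding G1_def by (rule wf_move_O[OF wfG Oc])
  have m1: "move_equiv G G1" unfolding G1_def by (rule ME_O[OF wfG Oc])
  have E1mem: "z \<in> edges G1 \<longleftrightarrow> (\<exists>e i. z = (e, i) \<and> e \<in> edges G \<and> ((rng G e \<noteq> u \<and> i = 0) \<or> (rng G e = u \<and> i < 2)))" for z
    unfolding G1_def move_O_def by auto
  have src1: "src G1 (e, i) = (if src G e = u then (u, p e) else (src G e, 0))" for e i
    unfolding G1_def move_O_def by simp
  have rng1: "rng G1 (e, i) = (if rng G e = u then (u, i) else (rng G e, 0))" for e i
    unfolding G1_def move_O_def by simp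
  have V1: "verts G1 = {(w, 0) | w. w \<in> verts G \<and> w \<noteq> u} \<union> {(u, i) | i. i < 2}"
    unfolding G1_def move_O_def by simp
  have cc1: "ccond G1 (u, 0) (e0, 0)"
  proof -
    have v: "(u, 0) \<in> verts G1" unfolding V1 by simp
    have "out_edges G1 (u, 0) = {(e0, 0)}"
    proof (intro equalityI subsetI)
      fix z assume "z \<in> out_edges G1 (u, 0)"
      then have z: "z \<in> edges G1" "src G1 z = (u, 0)" unfolding out_edges_def by auto
      then obtain e i where ei: "z = (e, i)" "e \<in> edges G" "(rng G e \<noteq> u \<and> i = 0) \<or> (rng G e = u \<and> i < 2)"
        unfolding E1mem by blast
      have "src G e = u \<and> p e = 0" using z(2) unfolding ei(1) src1 by (auto split: if_splits)
      then have "e = e0" unfolding p_def by (auto split: if_splits)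
      then show "z \<in> {(e0, 0)}" using ei se0 uv by auto
    next
      fix z assume "z \<in> {(e0, 0::nat)}"
      then have "z = (e0, 0)" by simp
      moreover have "(e0, 0::nat) \<in> edges G1" unfolding E1mem using e0E se0 uv by auto
      moreover have "src G1 (e0, 0) = (u, 0)" unfolding src1 using se0 by (simp add: p_def)
      ultimately show "z \<in> out_edges G1 (u, 0)" unfolding out_edges_def by simp
    qed
    moreover have "rng G1 (e0, 0) \<noteq> (u, 0)" unfolding rng1 using se0 uv by simp
    ultimately show ?thesis unfolding ccond_def using v by simp
  qed
  define G2 where "G2 = collapse G1 (u, 0) (e0, 0)"
  have m2: "move_equiv G1 G2" unfolding G2_def by (rule collapse_ME[OF wfG1 cc1])
  have wfG2: "wf_graph G2" unfolding G2_def by (rule wf_collapse[OF wfG1 cc1])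
  define \<iota> where "\<iota> x = (x, if x = u then 1 else 0::nat)" for x
  have V2: "verts G2 = \<iota> ` {0..<n}"
  proof -
    have "verts G2 = verts G1 - {(u, 0)}" unfolding G2_def collapse_def by simp
    also have "\<dots> = \<iota> ` {0..<n}"
    proof (intro equalityI subsetI)
      fix z assume "z \<in> verts G1 - {(u, 0)}"
      then show "z \<in> \<iota> ` {0..<n}" unfolding V1 G_def gom_simps \<iota>_def using un
        by (auto simp: image_iff less_2_cases_iff)
    next
      fix z assume "z \<in> \<iota> ` {0..<n}"
      then show "z \<in> verts G1 - {(u, 0)}" unfolding V1 G_def gom_simps \<iota>_def by auto
    qed
    finally show ?thesis .
  qed
  have bijV: "bij_betw fst (verts G2) (verts (graph_of_mat n A'))"
    unfolding V2 gom_simps bij_betw_def \<iota>_def by (auto simp: inj_on_def image_iff)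
  have src2: "src G2 z = src G1 z" for z unfolding G2_def collapse_def by simp
  have rng2: "rng G2 z = (if rng G1 z = (u, 0) then rng G1 (e0, 0) else rng G1 z)" for z
    unfolding G2_def collapse_def by simp
  have E2: "edges G2 = edges G1 - {(e0, 0)}" unfolding G2_def collapse_def by simp
  have srcI: "src G1 (e, i) = \<iota> x \<longleftrightarrow> src G e = x \<and> e \<noteq> e0" if "e \<in> edges G" for e i x
    unfolding src1 \<iota>_def p_def using se0 by auto
  have pe2: "pe G2 (\<iota> x) (\<iota> y) = (\<lambda>e. (e, if y = u then 1 else 0)) `
      {e \<in> edges G. src G e = x \<and> e \<noteq> e0 \<and> (rng G e = y \<or> (y = v \<and> rng G e = u))}" for x y
  proof (intro equalityI subsetI)
    fix z assume "z \<in> pe G2 (\<iota> x) (\<iota> y)"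
    then have z: "z \<in> edges G1" "src G1 z = \<iota> x" "rng G2 z = \<iota> y" unfolding pe_def E2 src2 by auto
    then obtain e i where ei: "z = (e, i)" "e \<in> edges G" "(rng G e \<noteq> u \<and> i = 0) \<or> (rng G e = u \<and> i < 2)"
      unfolding E1mem by blast
    have s: "src G e = x" "e \<noteq> e0" using z(2) srcI[OF ei(2)] unfolding ei(1) by auto
    have r: "rng G e = y \<or> (y = v \<and> rng G e = u)" and i: "i = (if y = u then 1 else 0)"
      using z(3) ei(3) se0 uv unfolding ei(1) rng2 rng1 \<iota>_def by (auto split: if_splits simp: less_2_cases_iff)
    show "z \<in> (\<lambda>e. (e, if y = u then 1 else 0)) `
      {e \<in> edges G. src G e = x \<and> e \<noteq> e0 \<and> (rng G e = y \<or> (y = v \<and> rng G e = u))}"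
      unfolding ei(1) i using ei(2) s r by auto
  next
    fix z assume "z \<in> (\<lambda>e. (e, if y = u then 1 else 0::nat)) `
      {e \<in> edges G. src G e = x \<and> e \<noteq> e0 \<and> (rng G e = y \<or> (y = v \<and> rng G e = u))}"
    then obtain e where e: "z = (e, if y = u then 1 else 0)" "e \<in> edges G" "src G e = x" "e \<noteq> e0"
      "rng G e = y \<or> (y = v \<and> rng G e = u)" by blast
    have "z \<in> edges G1" unfolding E1mem e(1) using e(2,5) uv by auto
    moreover have "z \<noteq> (e0, 0)" using e(1,4) by simp
    moreover have "src G1 z = \<iota> x" unfolding e(1) using srcI[OF e(2)] e(3,4) by simp
    moreover have "rng G2 z = \<iota> y" unfolding e(1) rng2 rng1 \<iota>_def using e(5) se0 uv by auto
    ultimately show "z \<in> pe G2 (\<iota> x) (\<iota> y)" unfolding pe_def E2 src2 by simp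
  qed
  have cnt: "ecard (pe G2 (\<iota> x) (\<iota> y)) = A' x y" if "x < n" "y < n" for x y
  proof -
    have inj: "inj_on (\<lambda>e. (e, if y = u then 1 else 0::nat)) X" for X by (auto simp: inj_on_def)
    let ?X = "{e \<in> edges G. src G e = x \<and> e \<noteq> e0 \<and> (rng G e = y \<or> (y = v \<and> rng G e = u))}"
    have "ecard (pe G2 (\<iota> x) (\<iota> y)) = ecard ?X" unfolding pe2 by (rule ecard_image[OF inj])
    also have "\<dots> = A' x y"
    proof (cases "y = v")
      case True
      have X: "?X = (pe G x v - {e0}) \<union> pe G x u" unfolding pe_def True using uv se0 by auto
      have d: "(pe G x v - {e0}) \<inter> pe G x u = {}" unfolding pe_def using uv by auto
      have "ecard (pe G x v - {e0}) = A x v - (if x = u then 1 else 0)"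
      proof (cases "x = u")
        case True
        have "e0 \<in> pe G x v" unfolding pe_def True using e0E se0 by simp
        then have "ecard (pe G x v - {e0}) = ecard (pe G x v) - 1" by (rule ecard_Diff1)
        moreover have "ecard (pe G x v) = A x v" unfolding G_def by (rule ecard_pe_gom[OF that(1) vn])
        ultimately show ?thesis using True by simp
      next
        case False
        have "e0 \<notin> pe G x v" unfolding pe_def using False se0 by auto
        then have "pe G x v - {e0} = pe G x v" by simp
        moreover have "ecard (pe G x v) = A x v" unfolding G_def by (rule ecard_pe_gom[OF that(1) vn])
        ultimately show ?thesis using False by simp
      qed
      then show ?thesis unfolding X ecard_Un[OF d] A'_def using True ecard_pe_gom[OF that(1) un] unfolding G_def
        by simp
    next
      case False
      have X: "?X = pe G x y" unfolding pe_def using False se0 by auto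
      show ?thesis unfolding X A'_def using False ecard_pe_gom[OF that] unfolding G_def by simp
    qed
    finally show ?thesis .
  qed
  have iso: "graph_iso G2 (graph_of_mat n A')"
  proof (rule iso_by_counts[OF wfG2 wf_gom bijV])
    fix a b assume "a \<in> verts G2" "b \<in> verts G2"
    then obtain x y where xy: "a = \<iota> x" "b = \<iota> y" "x < n" "y < n" unfolding V2 by auto
    have "fst a = x" "fst b = y" unfolding xy \<iota>_def by simp_all
    then show "ecard (pe G2 a b) = ecard (pe (graph_of_mat n A') (fst a) (fst b))"
      using cnt[OF xy(3,4)] ecard_pe_gom[OF xy(3,4)] unfolding xy by simp
  qed
  have "(e0, 0::nat) \<in> edges G1" unfolding E1mem using e0E se0 uv by auto
  then have g1: "good G1" unfolding good_def using wfG1 by blast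
  have "move_equiv G G2" by (rule ME_trans[OF m1 m2 g1])
  then have "move_equiv G (graph_of_mat n A')" by (rule ME_iso_right[OF _ iso wfG2])
  then show ?thesis unfolding G_def A'_def .
qed



lemma rmat_carrier: "real_mat_of n C \<in> carrier_mat n n"
  unfolding real_mat_of_def by simp

lemma rmat_col: "r < n \<Longrightarrow> k < n \<Longrightarrow> col (real_mat_of n C) k $ r = real (C r k)"
  unfolding real_mat_of_def by simp

lemma rows_equal:
  fixes C :: "nat \<Rightarrow> nat \<Rightarrow> nat"
  assumes rk: "vec_space.rank n (real_mat_of n C) = 1"
    and i0: "i0 < n" and i: "i < n" and j: "j < n" and c0: "C i0 0 = C i 0" and nz: "C i0 0 \<noteq> 0"
  shows "C i0 j = C i j"
proof (rule ccontr)
  assume ne: "C i0 j \<noteq> C i j"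
  interpret vs: vec_space "TYPE(real)" n .
  define M where "M = real_mat_of n C"
  have Mc: "M \<in> carrier_mat n n" unfolding M_def by (rule rmat_carrier)
  have n0: "0 < n" using i0 by simp
  define c where "c = col M 0"
  define cj where "cj = col M j"
  have cne: "c \<noteq> cj"
  proof
    assume "c = cj"
    then have "c $ i0 = cj $ i0" "c $ i = cj $ i" by simp_all
    then show False using ne c0 unfolding c_def cj_def M_def by (simp add: rmat_col i0 i j n0)
  qed
  have cc: "c \<in> carrier_vec n" "cj \<in> carrier_vec n" unfolding c_def cj_def using Mc by auto
  have U: "{c, cj} \<subseteq> set (cols M)"
  proof -
    have "c \<in> set (cols M)" unfolding c_def using Mc n0 by (metis carrier_matD(2) cols_length cols_nth nth_mem)
    moreover have "cj \<in> set (cols M)" unfolding cj_def using Mc j by (metis carrier_matD(2) cols_length cols_nth nth_mem)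
    ultimately show ?thesis by simp
  qed
  have li: "vs.lin_indpt {c, cj}"
  proof (rule vs.finite_lin_indpt2, goal_cases)
    case 1 show ?case by simp
  next
    case 2 show ?case using cc by simp
  next
    case (3 a)
    have lc: "vs.lincomb a {c, cj} = 0\<^sub>v n" using 3(2) by simp
    have e: "a c * c $ r + a cj * cj $ r = 0" if "r < n" for r
    proof -
      have "vs.lincomb a {c, cj} $ r = 0" using lc that by simp
      then show ?thesis using vs.lincomb_index[OF that, of "{c, cj}" a] cc cne by simp
    qed
    have e1: "a c * real (C i0 0) + a cj * real (C i0 j) = 0" using e[OF i0] unfolding c_def cj_def M_def
      by (simp add: rmat_col i0 n0 j)
    have e2: "a c * real (C i 0) + a cj * real (C i j) = 0" using e[OF i] unfolding c_def cj_def M_def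
      by (simp add: rmat_col i n0 j)
    have "a cj * real (C i0 j) = a cj * real (C i j)" using e1 e2 unfolding c0 by linarith
    then have "a cj * (real (C i0 j) - real (C i j)) = 0" by (simp add: right_diff_distrib)
    moreover have "real (C i0 j) - real (C i j) \<noteq> 0" using ne by simp
    ultimately have acj: "a cj = 0" by simp
    then have "a c = 0" using e1 nz by simp
    then show ?case using acj by simp
  qed
  have "card {c, cj} \<le> vec_space.rank n M" by (rule vs.rank_ge_card_indpt[OF Mc U li])
  then show False using cne rk unfolding M_def by simp
qed

lemma rank_zero:
  fixes C :: "nat \<Rightarrow> nat \<Rightarrow> nat"
  assumes "\<forall>i<n. \<forall>j<n. C i j = 0"
  shows "vec_space.rank n (real_mat_of n C) = 0"
proof -
  interpret vs: vec_space "TYPE(real)" n .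
  have "real_mat_of n C = 0\<^sub>m n n" unfolding real_mat_of_def using assms by (auto intro!: eq_matI)
  then show ?thesis using vs.rank_0I by simp
qed



definition Mx :: "nat \<Rightarrow> (nat \<Rightarrow> nat) \<Rightarrow> nat \<Rightarrow> nat \<Rightarrow> enat" where
  "Mx m c i j = (if i < m then enat (c j + (if i = j then 1 else 0)) else \<infinity>)"

lemma gom_cong: "(\<And>i j. i < n \<Longrightarrow> j < n \<Longrightarrow> A i j = B i j) \<Longrightarrow> graph_of_mat n A = graph_of_mat n B"
  unfolding graph_of_mat_def by auto

lemma Mx_step:
  assumes m1: "1 \<le> m" and mn: "m \<le> n" and c0: "c 0 = d" and d1: "1 \<le> d" and j0: "0 < j" and jn: "j < n"
    and cj: "1 \<le> c j"
  shows "move_equiv (graph_of_mat n (Mx m c)) (graph_of_mat n (Mx m (c(j := c j + d))))"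
proof -
  have n0: "0 < n" using m1 mn by simp
  have A0j: "0 < Mx m c 0 j" unfolding Mx_def using m1 cj j0 by (simp add: zero_enat_def)
  have A00: "0 < Mx m c 0 0" unfolding Mx_def using m1 by (simp add: zero_enat_def)
  have "j \<noteq> 0" using j0 by simp
  note ca = CA[of 0 n j "Mx m c", OF n0 jn _ A0j A00]
  have m: "move_equiv (graph_of_mat n (Mx m c))
     (graph_of_mat n (\<lambda>x y. if y = j then (Mx m c x j - (if x = 0 then 1 else 0)) + Mx m c x 0 else Mx m c x y))"
    using ca \<open>j \<noteq> 0\<close> by simp
  have eq: "graph_of_mat n (\<lambda>x y. if y = j then (Mx m c x j - (if x = 0 then 1 else 0)) + Mx m c x 0 else Mx m c x y)
    = graph_of_mat n (Mx m (c(j := c j + d)))"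
  proof (rule gom_cong)
    fix x y assume "x < n" "y < n"
    show "(if y = j then (Mx m c x j - (if x = 0 then 1 else 0)) + Mx m c x 0 else Mx m c x y) = Mx m (c(j := c j + d)) x y"
    proof (cases "y = j")
      case False then show ?thesis unfolding Mx_def by simp
    next
      case True
      show ?thesis
      proof (cases "x < m")
        case False
        then have "x \<noteq> 0" using m1 by auto
        then show ?thesis using True False unfolding Mx_def by simp
      next
        case xm: True
        show ?thesis
        proof (cases "x = 0")
          case True
          have "enat (c j) - 1 + enat (d + 1) = enat (c j + d)" using cj by (simp add: one_enat_def)
          then show ?thesis using True \<open>y = j\<close> xm \<open>j \<noteq> 0\<close> c0 unfolding Mx_def by simp
        next
          case False
          then show ?thesis using \<open>y = j\<close> xm c0 unfolding Mx_def by (simp add: zero_enat_def)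
        qed
      qed
    qed
  qed
  show ?thesis using m unfolding eq .
qed

lemma good_Mx:
  assumes "1 \<le> m" "m \<le> n"
  shows "good (graph_of_mat n (Mx m c))"
proof -
  have "(0, 0, 0) \<in> edges (graph_of_mat n (Mx m c))" unfolding gom_simps Mx_def using assms
    by (simp add: zero_enat_def)
  then show ?thesis unfolding good_def using wf_gom[of n "Mx m c"] by blast
qed

lemma reduce:
  assumes m1: "1 \<le> m" and mn: "m \<le> n" and d1: "1 \<le> d"
  shows "c 0 = d \<Longrightarrow> (\<forall>j<n. d dvd c j \<and> 1 \<le> c j) \<Longrightarrow>
     move_equiv (graph_of_mat n (Mx m c)) (graph_of_mat n (Mx m (\<lambda>_. d)))"
proof (induction "\<Sum>j<n. c j" arbitrary: c rule: less_induct)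
  case less
  show ?case
  proof (cases "\<forall>j<n. c j = d")
    case True
    then have "graph_of_mat n (Mx m c) = graph_of_mat n (Mx m (\<lambda>_. d))"
      by (intro gom_cong) (simp add: Mx_def)
    then show ?thesis using ME_refl by metis
  next
    case False
    then obtain j where jn: "j < n" and cjd: "c j \<noteq> d" by blast
    have j0: "0 < j" using cjd less.prems(1) by (cases j) auto
    obtain k where k: "c j = d * k" using less.prems(2) jn by blast
    have "k \<noteq> 0" using k less.prems(2) jn by (metis mult_0_right not_one_le_zero)
    moreover have "k \<noteq> 1" using k cjd by simp
    ultimately have "k \<ge> 2" by simp
    then have cj2: "c j \<ge> d + d" using k d1 by (metis mult_2_right mult_le_mono2)
    define c' where "c' = c(j := c j - d)"
    have c'0: "c' 0 = d" unfolding c'_def using less.prems(1) j0 by simp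
    have c'j: "c' j = d * (k - 1)" unfolding c'_def using k by (simp add: right_diff_distrib')
    have c'p: "\<forall>i<n. d dvd c' i \<and> 1 \<le> c' i"
    proof (intro allI impI)
      fix i assume "i < n"
      show "d dvd c' i \<and> 1 \<le> c' i"
      proof (cases "i = j")
        case True
        have "d dvd c' j" using c'j by simp
        moreover have "1 \<le> c' j" unfolding c'_def using cj2 d1 by simp
        ultimately show ?thesis using True by simp
      next
        case False then show ?thesis using less.prems(2) \<open>i < n\<close> unfolding c'_def by simp
      qed
    qed
    have lt: "(\<Sum>i<n. c' i) < (\<Sum>i<n. c i)"
    proof (rule sum_strict_mono_ex1)
      show "finite {..<n}" by simp
      show "\<forall>x\<in>{..<n}. c' x \<le> c x" unfolding c'_def by simp
      show "\<exists>a\<in>{..<n}. c' a < c a" using jn cj2 d1 unfolding c'_def by (intro bexI[of _ j]) auto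
    qed
    have ih: "move_equiv (graph_of_mat n (Mx m c')) (graph_of_mat n (Mx m (\<lambda>_. d)))"
      by (rule less.hyps[OF lt c'0 c'p])
    have st: "move_equiv (graph_of_mat n (Mx m c')) (graph_of_mat n (Mx m (c'(j := c' j + d))))"
      using Mx_step[of m n c' d j, OF m1 mn c'0 d1 j0 jn] c'p jn by blast
    have "c'(j := c' j + d) = c" unfolding c'_def using cj2 by auto
    then have "move_equiv (graph_of_mat n (Mx m c)) (graph_of_mat n (Mx m c'))" using ME_sym st by metis
    then show ?thesis by (rule ME_trans[OF _ ih good_Mx[OF m1 mn]])
  qed
qed



theorem lemma8p4:
  fixes C :: "nat \<Rightarrow> nat \<Rightarrow> nat" and n m d :: nat
  assumes "m \<le> n"
    and "\<forall>i<m. \<forall>j<n. C i j \<noteq> 0"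
    and "\<forall>i. m \<le> i \<and> i < n \<longrightarrow> (\<forall>j<n. C i j = 0)"
    and "d = Gcd {C i j | i j. i < n \<and> j < n \<and> C i j \<noteq> 0}"
    and "\<forall>i<n. C i 0 = (if i < m then d else 0)"
    and "vec_space.rank n (real_mat_of n C) = 1"
  shows "mat_move_equiv n (mat_plus (J_mat n m) C) (mat_plus (J_mat n m) (D_mat n m d))"
proof -
  note mn = assms(1)
  have m1: "1 \<le> m"
  proof (rule ccontr)
    assume "\<not> 1 \<le> m"
    then have "m = 0" by simp
    then have "\<forall>i<n. \<forall>j<n. C i j = 0" using assms(3) by simp
    then show False using rank_zero[of n C] assms(6) by simp
  qed
  have n0: "0 < n" using m1 mn by simp
  have Cd: "C 0 0 = d" using assms(5) n0 m1 by simp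
  have d0: "d \<noteq> 0" using assms(2) m1 n0 Cd by auto
  then have d1: "1 \<le> d" by simp
  have rows: "C i j = C 0 j" if "i < m" "j < n" for i j
  proof -
    have "C 0 0 = C i 0" using assms(5) that mn n0 m1 by simp
    then show ?thesis using rows_equal[OF assms(6) n0 _ that(2) _ ] that mn d0 Cd by (metis order_less_le_trans)
  qed
  define c where "c j = C 0 j" for j
  have c0: "c 0 = d" unfolding c_def using Cd .
  have cp: "\<forall>j<n. d dvd c j \<and> 1 \<le> c j"
  proof (intro allI impI)
    fix j assume j: "j < n"
    have nz: "C 0 j \<noteq> 0" using assms(2) m1 j by simp
    then have "C 0 j \<in> {C i j | i j. i < n \<and> j < n \<and> C i j \<noteq> 0}" using n0 j by blast
    then have "d dvd C 0 j" unfolding assms(4) by (rule Gcd_dvd)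
    then show "d dvd c j \<and> 1 \<le> c j" using nz unfolding c_def by simp
  qed
  have r: "move_equiv (graph_of_mat n (Mx m c)) (graph_of_mat n (Mx m (\<lambda>_. d)))"
    by (rule reduce[OF m1 mn d1 c0 cp])
  have e1: "graph_of_mat n (mat_plus (J_mat n m) C) = graph_of_mat n (Mx m c)"
  proof (rule gom_cong)
    fix i j assume "i < n" "j < n"
    show "mat_plus (J_mat n m) C i j = Mx m c i j"
    proof (cases "i < m")
      case True then show ?thesis unfolding mat_plus_def J_mat_def Mx_def c_def using rows[OF True \<open>j < n\<close>]
        by (simp add: one_enat_def zero_enat_def)
    next
      case False then show ?thesis unfolding mat_plus_def J_mat_def Mx_def by simp
    qed
  qed
  have e2: "graph_of_mat n (mat_plus (J_mat n m) (D_mat n m d)) = graph_of_mat n (Mx m (\<lambda>_. d))"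
  proof (rule gom_cong)
    fix i j assume "i < n" "j < n"
    show "mat_plus (J_mat n m) (D_mat n m d) i j = Mx m (\<lambda>_. d) i j"
      unfolding mat_plus_def J_mat_def Mx_def D_mat_def by (simp add: one_enat_def zero_enat_def)
  qed
  show ?thesis unfolding mat_move_equiv_def e1 e2 by (rule r)
qed


end
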